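(* Let $g$, $u_0$ be as in the context and let $u^{\rm LT}(t,x_n)$ be the time-continuous interpolation of the Lie–Trotter scheme defined in the context. For all $\gamma\in(0,\infty)$ and all $T\in(0,\infty)$ there exists $C_{\gamma,T}\in(0,\infty)$ such that for all $\tau=T/M$ and $h=1/N$ satisfying $\tau\le\gamma h$, for all $m\in\{0,\dots,M-1\}$ and all $t\in[t_m,t_{m+1})$, $$\sup_{1\le n\le N-1}\big(\mathbb E[|u^{\rm LT}(t,x_n)-u^{\rm LT}(t_m,x_n)|^2]\big)^{1/2}\le C_{\gamma,T}\big(1+\|u_0\|_\infty\big)\Big(\frac{\tau}{h}\Big)^{1/2}.$$
   Context: $W$ is an $\mathcal F_t$-adapted Brownian sheet on $[0,T]\times[0,1]$ (centered Gaussian field with covariance $(t\wedge s)(x\wedge y)$). The map $g:\mathbb R\to\mathbb R$ is of class $\mathcal C^1$, globally Lipschitz, with $g(0)=0$; define $f(v)=g(v)/v$ for $v\ne0$ and $f(0)=g'(0)$. The initial value $u_0:[0,1]\to\mathbb R$ is of class $\mathcal C^3$ with $u_0(0)=u_0(1)=0$, and $\|u_0\|_\infty=\max|u_0|$. Let $h=1/N$, $x_n=nh$, $\tau=T/M$, $t_m=m\tau$. Let $D^N$ be the $(N-1)\times(N-1)$ tridiagonal matrix with $-2$ on the diagonal and $1$ on the off-diagonals. Let $W_n^N(t)=\sqrt N\,(W(t,x_{n+1})-W(t,x_n))$ and $\Delta_{m,n}W=W_n^N(t_{m+1})-W_n^N(t_m)$. Lie–Trotter scheme: $u_{0,n}^{\rm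 LT}=u_0(x_n)$, and for $0\le m\le M-1$, $$u_{m+1}^{\rm LT}=e^{\tau N^2D^N}\Big(\exp\big(\sqrt N f(u_{m,n}^{\rm LT})\Delta_{m,n}W-\tfrac{N f(u_{m,n}^{\rm LT})^2\tau}{2}\big)u_{m,n}^{\rm LT}\Big)_{1\le n\le N-1}.$$ Interpolation: $u^{\rm LT}(t_m,x_n)=u_{m,n}^{\rm LT}$, and for $t\in[t_m,t_{m+1})$, $1\le n\le N-1$, $u^{\rm LT}(t,x_n)=\exp\big(\sqrt N f(u_{m,n}^{\rm LT})(W_n^N(t)-W_n^N(t_m))-\tfrac{N f(u_{m,n}^{\rm LT})^2(t-t_m)}{2}\big)u_{m,n}^{\rm LT}$. *)

theory Defs
  imports "HOL-Probability.Probability"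
begin

definition centered_gaussian :: "'a measure \<Rightarrow> ('a \<Rightarrow> real) \<Rightarrow> real \<Rightarrow> bool" where
  "centered_gaussian P X v \<longleftrightarrow>
     X \<in> borel_measurable P \<and>
     ((v = 0 \<and> (AE \<omega> in P. X \<omega> = 0)) \<or>
      (v > 0 \<and> distributed P lborel X (normal_density 0 (sqrt v))))"

text \<open>Brownian sheet on [0,oo) x [0,1], adapted to the filtration F:
  centered Gaussian field with covariance (min t s)(min x y) (every finite
  linear combination is centered Gaussian with the corresponding variance),
  W(t,x) is F_t-measurable, and the increments after time s are independent
  of F_s.\<close>
definition brownian_sheet ::
  "'a measure \<Rightarrow> (real \<Rightarrow> 'a measure) \<Rightarrow> (real \<Rightarrow> real \<Rightarrow> 'a \<Rightarrow> real) \<Rightarrow> bool" where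
  "brownian_sheet P F W \<longleftrightarrow>
     filtration (space P) F \<and> (\<forall>t. sets (F t) \<subseteq> sets P) \<and>
     (\<forall>t x. 0 \<le> t \<longrightarrow> 0 \<le> x \<longrightarrow> x \<le> 1 \<longrightarrow> W t x \<in> borel_measurable (F t)) \<and>
     (\<forall>(k::nat) (ts::nat \<Rightarrow> real) (xs::nat \<Rightarrow> real) (c::nat \<Rightarrow> real).
        (\<forall>i<k. 0 \<le> ts i \<and> 0 \<le> xs i \<and> xs i \<le> 1) \<longrightarrow>
        centered_gaussian P (\<lambda>\<omega>. \<Sum>i<k. c i * W (ts i) (xs i) \<omega>)
          (\<Sum>i<k. \<Sum>j<k. c i * c j * min (ts i) (ts j) * min (xs i) (xs j))) \<and>
     (\<forall>s. 0 \<le> s \<longrightarrow>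
        prob_space.indep_set P (sets (F s))
          (sigma_sets (space P)
             (\<Union>r\<in>{s..}. \<Union>x\<in>{0..1}.
                {(\<lambda>\<omega>. W r x \<omega> - W s x \<omega>) -` B \<inter> space P | B. B \<in> sets borel})))"

definition C3_on_unit :: "(real \<Rightarrow> real) \<Rightarrow> bool" where
  "C3_on_unit u \<longleftrightarrow> (\<exists>u1 u2 u3. continuous_on {0..1} u3 \<and>
     (\<forall>x\<in>{0..1}. (u has_real_derivative u1 x) (at x within {0..1}) \<and>
                  (u1 has_real_derivative u2 x) (at x within {0..1}) \<and>
                  (u2 has_real_derivative u3 x) (at x within {0..1})))"

definition sup_norm01 :: "(real \<Rightarrow> real) \<Rightarrow> real" where
  "sup_norm01 u = Sup ((\<lambda>x. \<bar>u x\<bar>) ` {0..1})"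

definition fq :: "(real \<Rightarrow> real) \<Rightarrow> real \<Rightarrow> real" where
  "fq g v = (if v = 0 then deriv g 0 else g v / v)"

definition WN :: "(real \<Rightarrow> real \<Rightarrow> 'a \<Rightarrow> real) \<Rightarrow> nat \<Rightarrow> real \<Rightarrow> nat \<Rightarrow> 'a \<Rightarrow> real" where
  "WN W N t n \<omega> = sqrt (real N) * (W t (real (Suc n) / real N) \<omega> - W t (real n / real N) \<omega>)"

text \<open>Vectors of R^(N-1) are represented as functions nat => real, indexed by
  1..N-1 (other entries are irrelevant). DN N v is the product D^N v of the
  tridiagonal matrix (-2 on the diagonal, 1 off the diagonal) with v.\<close>
definition DN :: "nat \<Rightarrow> (nat \<Rightarrow> real) \<Rightarrow> nat \<Rightarrow> real" where
  "DN N v n = (if 1 \<le> n \<and> n \<le> N - 1 then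
       (if 2 \<le> n then v (n - 1) else 0) - 2 * v n + (if n + 1 \<le> N - 1 then v (n + 1) else 0)
     else 0)"

definition expD :: "nat \<Rightarrow> real \<Rightarrow> (nat \<Rightarrow> real) \<Rightarrow> nat \<Rightarrow> real" where
  "expD N s v n = (\<Sum>k. s ^ k / fact k * ((DN N ^^ k) v) n)"

primrec LT :: "(real \<Rightarrow> real) \<Rightarrow> (real \<Rightarrow> real) \<Rightarrow> (real \<Rightarrow> real \<Rightarrow> 'a \<Rightarrow> real) \<Rightarrow>
    real \<Rightarrow> nat \<Rightarrow> nat \<Rightarrow> nat \<Rightarrow> nat \<Rightarrow> 'a \<Rightarrow> real" where
  "LT g u0 W T M N 0 n \<omega> = u0 (real n / real N)"
| "LT g u0 W T M N (Suc m) n \<omega> =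
     expD N ((T / real M) * (real N)^2)
       (\<lambda>k. exp (sqrt (real N) * fq g (LT g u0 W T M N m k \<omega>) *
                   (WN W N (real (Suc m) * (T / real M)) k \<omega> - WN W N (real m * (T / real M)) k \<omega>)
                 - real N * (fq g (LT g u0 W T M N m k \<omega>))^2 * (T / real M) / 2)
            * LT g u0 W T M N m k \<omega>) n"

definition LT_interp :: "(real \<Rightarrow> real) \<Rightarrow> (real \<Rightarrow> real) \<Rightarrow> (real \<Rightarrow> real \<Rightarrow> 'a \<Rightarrow> real) \<Rightarrow>
    real \<Rightarrow> nat \<Rightarrow> nat \<Rightarrow> real \<Rightarrow> nat \<Rightarrow> 'a \<Rightarrow> real" where
  "LT_interp g u0 W T M N t n \<omega> =
     (let \<tau> = T / real M; m = nat \<lfloor>t / \<tau>\<rfloor>; u = LT g u0 W T M N m n \<omega> in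
      exp (sqrt (real N) * fq g u * (WN W N t n \<omega> - WN W N (real m * \<tau>) n \<omega>)
           - real N * (fq g u)^2 * (t - real m * \<tau>) / 2) * u)"

end

theory Submission
  imports Defs
begin


lemma cos_sum_tel:
  fixes y :: real
  shows "2 * sin y * (\<Sum>n=1..m. cos (2 * real n * y)) = sin ((2 * real m + 1) * y) - sin y"
proof (induction m)
  case 0 then show ?case by simp
next
  case (Suc m)
  have e: "2 * sin y * cos (2 * real (Suc m) * y) = sin ((2 * real (Suc m) + 1) * y) - sin ((2 * real m + 1) * y)"
  proof -
    define a where "a = 2 * real (Suc m) * y"
    have "sin ((2 * real (Suc m) + 1) * y) = sin (a + y)" by (simp add: a_def algebra_simps)
    moreover have "sin ((2 * real m + 1) * y) = sin (a - y)" by (simp add: a_def algebra_simps)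
    moreover have "2 * sin y * cos a = sin (a + y) - sin (a - y)" by (simp add: sin_add sin_diff)
    ultimately show ?thesis by (simp add: a_def)
  qed
  have s: "(\<Sum>n=1..Suc m. cos (2 * real n * y)) = (\<Sum>n=1..m. cos (2 * real n * y)) + cos (2 * real (Suc m) * y)"
    by (simp del: of_nat_Suc)
  show ?case unfolding s distrib_left using Suc e by linarith
qed

lemma cos_sum_N:
  fixes N p :: nat
  assumes "0 < p" "p < 2 * N"
  shows "(\<Sum>n=1..N-1. cos (real p * real n * pi / real N)) = - (1 + (-1) ^ p) / 2"
proof -
  define y where "y = real p * pi / (2 * real N)"
  have N: "N > 0" using assms by auto
  have ypos: "0 < y" "y < pi" using assms N by (auto simp: y_def field_simps)
  have sy: "sin y > 0" using ypos by (simp add: sin_gt_zero)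
  have c: "\<And>n. cos (real p * real n * pi / real N) = cos (2 * real n * y)"
    using N by (simp add: y_def field_simps)
  have "sin ((2 * real (N - 1) + 1) * y) = sin (real p * pi - y)"
    using N by (simp add: y_def of_nat_diff field_simps)
  also have "\<dots> = - ((-1) ^ p) * sin y"
    by (simp add: sin_diff sin_npi cos_npi_int)
  finally have "2 * sin y * (\<Sum>n=1..N-1. cos (2 * real n * y)) = - ((-1) ^ p) * sin y - sin y"
    using cos_sum_tel[of y "N-1"] by simp
  then have "2 * sin y * (\<Sum>n=1..N-1. cos (2 * real n * y)) = 2 * sin y * (- (1 + (-1) ^ p) / 2)"
    by (simp add: algebra_simps)
  then have "(\<Sum>n=1..N-1. cos (2 * real n * y)) = - (1 + (-1) ^ p) / 2"
    using sy by simp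
  then show ?thesis by (simp add: c)
qed

definition phi :: "nat \<Rightarrow> nat \<Rightarrow> nat \<Rightarrow> real" where
  "phi N i n = sin (real i * real n * pi / real N)"

lemma phi_sym: "phi N i n = phi N n i"
  by (simp add: phi_def mult.commute)

lemma sin_mult_sin: "sin (a::real) * sin b = (cos (a - b) - cos (a + b)) / 2"
  by (simp add: cos_diff cos_add)

lemma phi_prod:
  "phi N i n * phi N j n = (cos (real (if j \<le> i then i - j else j - i) * real n * pi / real N)
      - cos (real (i + j) * real n * pi / real N)) / 2"
proof -
  have "cos (real i * real n * pi / real N - real j * real n * pi / real N)
       = cos (real (if j \<le> i then i - j else j - i) * real n * pi / real N)"
  proof (cases "j \<le> i")
    case True then show ?thesis by (simp add: of_nat_diff algebra_simps diff_divide_distrib)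
  next
    case False
    have "cos (real i * real n * pi / real N - real j * real n * pi / real N)
        = cos (real j * real n * pi / real N - real i * real n * pi / real N)"
      by (metis cos_minus minus_diff_eq)
    then show ?thesis using False by (simp add: of_nat_diff algebra_simps diff_divide_distrib)
  qed
  moreover have "real i * real n * pi / real N + real j * real n * pi / real N
       = real (i + j) * real n * pi / real N" by (simp add: algebra_simps add_divide_distrib)
  ultimately show ?thesis unfolding phi_def sin_mult_sin by simp
qed

lemma phi_ortho:
  assumes "i \<in> {1..N-1}" "j \<in> {1..N-1}"
  shows "(\<Sum>n=1..N-1. phi N i n * phi N j n) = (if i = j then real N / 2 else 0)"
proof -
  define d where "d = (if j \<le> i then i - j else j - i)"
  have N: "N > 1" using assms by auto
  have "(\<Sum>n=1..N-1. phi N i n * phi N j n) =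
     ((\<Sum>n=1..N-1. cos (real d * real n * pi / real N)) - (\<Sum>n=1..N-1. cos (real (i + j) * real n * pi / real N))) / 2"
    by (simp only: phi_prod sum_divide_distrib[symmetric] sum_subtractf d_def)
  also have "\<dots> = (if i = j then real N / 2 else 0)"
  proof (cases "i = j")
    case True
    then have "d = 0" by (simp add: d_def)
    moreover have "(\<Sum>n=1..N-1. cos (real (i + j) * real n * pi / real N)) = -1"
      using cos_sum_N[of "i+j" N] assms True by auto
    ultimately show ?thesis using True N by (simp add: of_nat_diff)
  next
    case False
    have s1: "(\<Sum>n=1..N-1. cos (real d * real n * pi / real N)) = - (1 + (-1) ^ d) / 2"
      using cos_sum_N[of d N] assms False by (auto simp: d_def)
    have s2: "(\<Sum>n=1..N-1. cos (real (i + j) * real n * pi / real N)) = - (1 + (-1) ^ (i+j)) / 2"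
      using cos_sum_N[of "i+j" N] assms by auto
    have "i + j = d + 2 * min i j" by (auto simp: d_def)
    then have "(-1::real) ^ (i+j) = (-1) ^ d" by (simp add: power_add power_mult)
    then show ?thesis using False s1 s2 by simp
  qed
  finally show ?thesis .
qed

lemma phi_ortho':
  assumes "n \<in> {1..N-1}" "k \<in> {1..N-1}"
  shows "(\<Sum>i=1..N-1. phi N i n * phi N i k) = (if n = k then real N / 2 else 0)"
  using phi_ortho[OF assms] by (simp add: phi_sym)

definition lam :: "nat \<Rightarrow> nat \<Rightarrow> real" where
  "lam N i = 2 * (cos (real i * pi / real N) - 1)"

definition coef :: "nat \<Rightarrow> (nat \<Rightarrow> real) \<Rightarrow> nat \<Rightarrow> real" where
  "coef N v i = 2 / real N * (\<Sum>k=1..N-1. phi N i k * v k)"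

lemma phi_0[simp]: "phi N i 0 = 0"
  by (simp add: phi_def)

lemma phi_N[simp]: "N > 0 \<Longrightarrow> phi N i N = 0"
  by (simp add: phi_def sin_npi2 mult.commute)

lemma phi_eigen:
  assumes "1 \<le> n"
  shows "phi N i (n - 1) - 2 * phi N i n + phi N i (n + 1) = lam N i * phi N i n"
proof -
  define a where "a = real i * real n * pi / real N"
  define b where "b = real i * pi / real N"
  have "phi N i (n - 1) = sin (a - b)" using assms
    by (simp add: phi_def a_def b_def of_nat_diff algebra_simps diff_divide_distrib)
  moreover have "phi N i (n + 1) = sin (a + b)"
    by (simp add: phi_def a_def b_def algebra_simps add_divide_distrib)
  moreover have "phi N i n = sin a" by (simp add: phi_def a_def)
  ultimately show ?thesis unfolding lam_def b_def[symmetric]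
    by (simp add: sin_add sin_diff algebra_simps)
qed

lemma DN_spectral:
  assumes N: "N > 0" and w: "\<And>k. k \<in> {1..N-1} \<Longrightarrow> w k = (\<Sum>i=1..N-1. a i * phi N i k)"
    and n: "n \<in> {1..N-1}"
  shows "DN N w n = (\<Sum>i=1..N-1. a i * lam N i * phi N i n)"
proof -
  have l: "(if 2 \<le> n then w (n - 1) else 0) = (\<Sum>i=1..N-1. a i * phi N i (n - 1))"
  proof (cases "2 \<le> n")
    case True
    then have "n - 1 \<in> {1..N-1}" using n by auto
    then show ?thesis using w[of "n-1"] True by simp
  next
    case False then have "n = 1" using n by auto
    then show ?thesis by simp
  qed
  have r: "(if n + 1 \<le> N - 1 then w (n + 1) else 0) = (\<Sum>i=1..N-1. a i * phi N i (n + 1))"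
  proof (cases "n + 1 \<le> N - 1")
    case True
    then have "n + 1 \<in> {1..N-1}" using n by auto
    then show ?thesis using w[of "n+1"] True by simp
  next
    case False then have "n + 1 = N" using n by auto
    then show ?thesis using N by simp
  qed
  have "DN N w n = (\<Sum>i=1..N-1. a i * phi N i (n - 1)) - 2 * w n + (\<Sum>i=1..N-1. a i * phi N i (n + 1))"
    using n unfolding DN_def l r by auto
  also have "\<dots> = (\<Sum>i=1..N-1. a i * (phi N i (n - 1) - 2 * phi N i n + phi N i (n + 1)))"
    using w[OF n] by (simp add: algebra_simps sum.distrib sum_subtractf sum_distrib_left)
  also have "\<dots> = (\<Sum>i=1..N-1. a i * lam N i * phi N i n)"
  proof -
    have e: "\<And>i. phi N i (n - 1) - 2 * phi N i n + phi N i (n + 1) = lam N i * phi N i n"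
      using n phi_eigen by auto
    show ?thesis by (simp only: e mult.assoc)
  qed
  finally show ?thesis .
qed

lemma coef_expand:
  assumes "n \<in> {1..N-1}"
  shows "v n = (\<Sum>i=1..N-1. coef N v i * phi N i n)"
proof -
  have "(\<Sum>i=1..N-1. coef N v i * phi N i n) = (\<Sum>k=1..N-1. v k * (2 / real N * (\<Sum>i=1..N-1. phi N i k * phi N i n)))"
    unfolding coef_def by (simp add: sum_distrib_left sum_distrib_right algebra_simps) (rule sum.swap)
  also have "\<dots> = (\<Sum>k=1..N-1. (if k = n then v k else 0))"
  proof (intro sum.cong refl)
    fix k assume k: "k \<in> {1..N-1}"
    show "v k * (2 / real N * (\<Sum>i=1..N-1. phi N i k * phi N i n)) = (if k = n then v k else 0)"
      using phi_ortho'[OF k assms] k by auto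
  qed
  also have "\<dots> = v n" using assms by simp
  finally show ?thesis by simp
qed

lemma DN_pow_spectral:
  assumes N: "N > 0" and n: "n \<in> {1..N-1}"
  shows "(DN N ^^ j) v n = (\<Sum>i=1..N-1. coef N v i * lam N i ^ j * phi N i n)"
  using n
proof (induction j arbitrary: n)
  case 0 then show ?case using coef_expand[OF 0] by simp
next
  case (Suc j)
  have "(DN N ^^ Suc j) v n = DN N ((DN N ^^ j) v) n" by simp
  also have "\<dots> = (\<Sum>i=1..N-1. (coef N v i * lam N i ^ j) * lam N i * phi N i n)"
    by (rule DN_spectral[OF N _ Suc.prems]) (use Suc.IH in simp)
  finally show ?case by (simp add: algebra_simps)
qed

definition Kern :: "nat \<Rightarrow> real \<Rightarrow> nat \<Rightarrow> nat \<Rightarrow> real" where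
  "Kern N s n k = 2 / real N * (\<Sum>i=1..N-1. exp (s * lam N i) * phi N i n * phi N i k)"

lemma Kern_coef: "(\<Sum>k=1..N-1. Kern N s n k * v k) = (\<Sum>i=1..N-1. coef N v i * exp (s * lam N i) * phi N i n)"
  unfolding Kern_def coef_def
  by (simp add: sum_distrib_left sum_distrib_right algebra_simps) (rule sum.swap)

lemma expD_spectral:
  assumes N: "N > 0" and n: "n \<in> {1..N-1}"
  shows "expD N s v n = (\<Sum>k=1..N-1. Kern N s n k * v k)"
proof -
  have "(\<lambda>j. s ^ j / fact j * ((DN N ^^ j) v) n) = (\<lambda>j. \<Sum>i=1..N-1. coef N v i * phi N i n * ((s * lam N i) ^ j /\<^sub>R fact j))"
    by (rule ext) (simp add: DN_pow_spectral[OF N n] sum_distrib_left power_mult_distrib algebra_simps divide_inverse)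
  moreover have "(\<lambda>j. \<Sum>i=1..N-1. coef N v i * phi N i n * ((s * lam N i) ^ j /\<^sub>R fact j))
      sums (\<Sum>i=1..N-1. coef N v i * phi N i n * exp (s * lam N i))"
    by (intro sums_sum sums_mult exp_converges)
  ultimately have "expD N s v n = (\<Sum>i=1..N-1. coef N v i * phi N i n * exp (s * lam N i))"
    unfolding expD_def by (simp add: sums_iff)
  then show ?thesis unfolding Kern_coef by (simp add: algebra_simps)
qed

lemma Kern_sym: "Kern N s n k = Kern N s k n"
  unfolding Kern_def by (simp add: algebra_simps)

lemma coef_Kern:
  assumes i: "i \<in> {1..N-1}"
  shows "coef N (\<lambda>k. Kern N r k j) i = 2 / real N * exp (r * lam N i) * phi N i j"
proof -
  define e where "e = (\<lambda>i'. exp (r * lam N i'))"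
  have "coef N (\<lambda>k. Kern N r k j) i = 2 / real N * (2 / real N * (\<Sum>k=1..N-1. \<Sum>i'=1..N-1. phi N i k * (e i' * phi N i' k * phi N i' j)))"
    unfolding coef_def Kern_def e_def by (simp add: sum_distrib_left mult.assoc)
  also have "\<dots> = 2 / real N * (2 / real N * (\<Sum>i'=1..N-1. \<Sum>k=1..N-1. phi N i k * (e i' * phi N i' k * phi N i' j)))"
    by (subst sum.swap) (rule refl)
  also have "\<dots> = 2 / real N * (\<Sum>i'=1..N-1. e i' * phi N i' j * (2 / real N * (\<Sum>k=1..N-1. phi N i k * phi N i' k)))"
    by (simp add: sum_distrib_left sum_distrib_right mult.commute mult.left_commute)
  also have "(\<Sum>i'=1..N-1. e i' * phi N i' j * (2 / real N * (\<Sum>k=1..N-1. phi N i k * phi N i' k))) = (\<Sum>i'=1..N-1. if i' = i then e i * phi N i j else 0)"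
  proof (intro sum.cong refl)
    fix i' assume i': "i' \<in> {1..N-1}"
    show "e i' * phi N i' j * (2 / real N * (\<Sum>k=1..N-1. phi N i k * phi N i' k)) = (if i' = i then e i * phi N i j else 0)"
      using phi_ortho[OF i i'] i by auto
  qed
  also have "\<dots> = e i * phi N i j" using i by simp
  finally show ?thesis by (simp add: e_def)
qed

lemma Kern_semigroup:
  "(\<Sum>k=1..N-1. Kern N s n k * Kern N r k j) = Kern N (s + r) n j"
proof -
  have "(\<Sum>k=1..N-1. Kern N s n k * Kern N r k j) = (\<Sum>i=1..N-1. coef N (\<lambda>k. Kern N r k j) i * exp (s * lam N i) * phi N i n)"
    by (rule Kern_coef)
  also have "\<dots> = (\<Sum>i=1..N-1. 2 / real N * exp (r * lam N i) * phi N i j * exp (s * lam N i) * phi N i n)"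
    by (intro sum.cong refl) (simp add: coef_Kern)
  also have "\<dots> = Kern N (s + r) n j"
    unfolding Kern_def by (simp add: sum_distrib_left algebra_simps exp_add)
  finally show ?thesis .
qed

lemma Kern_sq: "(\<Sum>k=1..N-1. (Kern N s n k)^2) = Kern N (2 * s) n n"
proof -
  have "(\<Sum>k=1..N-1. (Kern N s n k)^2) = (\<Sum>k=1..N-1. Kern N s n k * Kern N s k n)"
  proof (intro sum.cong refl)
    fix x
    have "Kern N s x n = Kern N s n x" by (rule Kern_sym)
    then show "(Kern N s n x)^2 = Kern N s n x * Kern N s x n" by (simp add: power2_eq_square)
  qed
  also have "\<dots> = Kern N (s + s) n n" by (rule Kern_semigroup)
  also have "s + s = 2 * s" by simp
  finally show ?thesis .
qed

lemma Kern_0: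
  assumes "n \<in> {1..N-1}" "k \<in> {1..N-1}"
  shows "Kern N 0 n k = (if n = k then 1 else 0)"
  unfolding Kern_def using phi_ortho'[OF assms] assms by auto

lemma Kern_0_apply:
  assumes "n \<in> {1..N-1}"
  shows "(\<Sum>k=1..N-1. Kern N 0 n k * v k) = v n"
proof -
  have "(\<Sum>k=1..N-1. Kern N 0 n k * v k) = (\<Sum>k=1..N-1. if k = n then v k else 0)"
    by (intro sum.cong refl) (use assms in \<open>auto simp: Kern_0\<close>)
  then show ?thesis using assms by simp
qed

lemma Kern_diag_le:
  "Kern N s n n \<le> 2 / real N * (\<Sum>i=1..N-1. exp (s * lam N i))"
  unfolding Kern_def
proof (intro mult_left_mono sum_mono)
  fix i
  have "(phi N i n)^2 \<le> 1" unfolding phi_def by (simp add: sin_squared_eq)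
  then have "exp (s * lam N i) * (phi N i n)^2 \<le> exp (s * lam N i) * 1"
    by (intro mult_left_mono) auto
  then show "exp (s * lam N i) * phi N i n * phi N i n \<le> exp (s * lam N i)"
    by (simp add: power2_eq_square mult.assoc)
qed auto

definition Top :: "nat \<Rightarrow> real \<Rightarrow> (nat \<Rightarrow> real) \<Rightarrow> nat \<Rightarrow> real" where
  "Top N c v n = v n + c * DN N v n"

lemma Top_pow_spectral:
  assumes N: "N > 0" and n: "n \<in> {1..N-1}"
  shows "(Top N c ^^ j) v n = (\<Sum>i=1..N-1. coef N v i * (1 + c * lam N i) ^ j * phi N i n)"
  using n
proof (induction j arbitrary: n)
  case 0 then show ?case using coef_expand[OF 0] by simp
next
  case (Suc j)
  define w where "w = (Top N c ^^ j) v"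
  have "(Top N c ^^ Suc j) v n = w n + c * DN N w n" by (simp add: Top_def w_def)
  also have "DN N w n = (\<Sum>i=1..N-1. (coef N v i * (1 + c * lam N i) ^ j) * lam N i * phi N i n)"
    by (rule DN_spectral[OF N _ Suc.prems]) (use Suc.IH in \<open>simp add: w_def\<close>)
  also have "w n = (\<Sum>i=1..N-1. coef N v i * (1 + c * lam N i) ^ j * phi N i n)"
    using Suc.IH[OF Suc.prems] by (simp add: w_def)
  finally show ?case by (simp add: sum_distrib_left sum.distrib[symmetric] algebra_simps)
qed

lemma Top_bound:
  assumes c: "0 \<le> c" "c \<le> 1/2" and v: "\<And>k. k \<in> {1..N-1} \<Longrightarrow> \<bar>v k\<bar> \<le> B"
    and n: "n \<in> {1..N-1}"
  shows "\<bar>Top N c v n\<bar> \<le> B"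
proof -
  define a where "a = (if 2 \<le> n then v (n - 1) else 0)"
  define b where "b = (if n + 1 \<le> N - 1 then v (n + 1) else 0)"
  have B: "0 \<le> B" using v[OF n] by linarith
  have a: "\<bar>a\<bar> \<le> B" proof (cases "2 \<le> n")
    case True then have "n - 1 \<in> {1..N-1}" using n by auto
    then show ?thesis unfolding a_def using v[of "n-1"] True by simp
  qed (use B in \<open>simp add: a_def\<close>)
  have b: "\<bar>b\<bar> \<le> B" proof (cases "n + 1 \<le> N - 1")
    case True then have "n + 1 \<in> {1..N-1}" using n by auto
    then show ?thesis unfolding b_def using v[of "n+1"] True by simp
  qed (use B in \<open>simp add: b_def\<close>)
  have "Top N c v n = (1 - 2 * c) * v n + c * a + c * b"
    using n by (simp add: Top_def DN_def a_def b_def algebra_simps)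
  also have "\<bar>\<dots>\<bar> \<le> (1 - 2 * c) * \<bar>v n\<bar> + c * \<bar>a\<bar> + c * \<bar>b\<bar>"
    using c by (simp add: abs_mult abs_triangle_ineq order_trans[OF abs_triangle_ineq] add_mono)
  also have "\<dots> \<le> (1 - 2 * c) * B + c * B + c * B"
    using c a b v[OF n] by (intro add_mono mult_left_mono) auto
  finally show ?thesis by (simp add: algebra_simps)
qed

lemma Top_pow_bound:
  assumes c: "0 \<le> c" "c \<le> 1/2" and v: "\<And>k. k \<in> {1..N-1} \<Longrightarrow> \<bar>v k\<bar> \<le> B"
    and n: "n \<in> {1..N-1}"
  shows "\<bar>(Top N c ^^ j) v n\<bar> \<le> B"
  using n
proof (induction j arbitrary: n)
  case 0 then show ?case using v by simp
next
  case (Suc j)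
  show ?case using Top_bound[OF c Suc.IH Suc.prems] by simp
qed

lemma Kern_sup:
  assumes s: "0 \<le> s" and N: "N > 0" and v: "\<And>k. k \<in> {1..N-1} \<Longrightarrow> \<bar>v k\<bar> \<le> B"
    and n: "n \<in> {1..N-1}"
  shows "\<bar>\<Sum>k=1..N-1. Kern N s n k * v k\<bar> \<le> B"
proof -
  define X where "X = (\<lambda>j::nat. (Top N (s / real j) ^^ j) v n)"
  have X: "X j = (\<Sum>i=1..N-1. coef N v i * (1 + s * lam N i / real j) ^ j * phi N i n)" for j
    unfolding X_def Top_pow_spectral[OF N n] by simp
  have "X \<longlonglongrightarrow> (\<Sum>i=1..N-1. coef N v i * exp (s * lam N i) * phi N i n)"
    unfolding X by (intro tendsto_intros tendsto_exp_limit_sequentially)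
  then have lim: "(\<lambda>j. \<bar>X j\<bar>) \<longlonglongrightarrow> \<bar>\<Sum>k=1..N-1. Kern N s n k * v k\<bar>"
    unfolding Kern_coef by (rule tendsto_rabs)
  obtain J :: nat where J: "2 * s + 1 \<le> real J" using real_arch_simple by blast
  have ev: "\<forall>j\<ge>J. \<bar>X j\<bar> \<le> B"
  proof (intro allI impI)
    fix j assume "J \<le> j"
    then have j: "2 * s + 1 \<le> real j" using J by linarith
    then have "s / real j \<le> 1/2" using s by (simp add: field_simps)
    moreover have "0 \<le> s / real j" using s by simp
    ultimately show "\<bar>X j\<bar> \<le> B" unfolding X_def by (intro Top_pow_bound[OF _ _ v n]) auto
  qed
  show ?thesis by (rule LIMSEQ_le_const2[OF lim]) (use ev in blast)
qed

lemma jordan_sin: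
  assumes "0 \<le> x" "x \<le> pi / 2"
  shows "2 / pi * x \<le> sin x"
proof -
  define f where "f = (\<lambda>x::real. 2 / pi * x - sin x)"
  have cv: "convex_on {0..pi/2} f"
  proof (rule f''_ge0_imp_convex[where f' = "\<lambda>x. 2 / pi - cos x" and f'' = "\<lambda>x. sin x"])
    show "convex {0..pi/2}" by simp
    show "DERIV f x :> 2 / pi - cos x" for x unfolding f_def by (auto intro!: derivative_eq_intros)
    show "DERIV (\<lambda>x. 2 / pi - cos x) x :> sin x" for x by (auto intro!: derivative_eq_intros)
    show "x \<in> {0..pi/2} \<Longrightarrow> 0 \<le> sin x" for x by (intro sin_ge_zero) auto
  qed
  have "f x \<le> (f (pi/2) - f 0) / (pi/2 - 0) * (x - 0) + f 0"
    by (rule convex_onD_Icc'[OF cv]) (use assms in auto)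
  moreover have "f (pi/2) = 0" "f 0 = 0" by (auto simp: f_def)
  ultimately show ?thesis by (simp add: f_def)
qed

lemma lam_upper:
  assumes i: "i \<in> {1..N-1}"
  shows "lam N i \<le> - 4 * real i ^ 2 / real N ^ 2"
proof -
  have N: "N > 0" using i by auto
  define y where "y = real i * pi / (2 * real N)"
  have y: "0 \<le> y" "y \<le> pi / 2" using i N by (auto simp: y_def field_simps)
  have "cos (real i * pi / real N) = cos (2 * y)" using N by (simp add: y_def)
  also have "\<dots> = 1 - 2 * (sin y)^2" by (simp add: cos_double_sin)
  finally have l: "lam N i = - 4 * (sin y)^2" by (simp add: lam_def)
  have "2 / pi * y \<le> sin y" by (rule jordan_sin[OF y])
  moreover have "2 / pi * y = real i / real N" using N by (simp add: y_def field_simps)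
  ultimately have "(real i / real N)^2 \<le> (sin y)^2"
    using N by (intro power_mono) auto
  then show ?thesis unfolding l by (simp add: power_divide)
qed

lemma lam_le0: "lam N i \<le> 0"
  by (simp add: lam_def)



lemma geom_exp_sum:
  assumes a: "0 < a"
  shows "(\<Sum>p=1..m. exp (- a * real p)) \<le> 1 / a"
proof -
  define r where "r = exp (- a)"
  have r: "0 < r" "r < 1" using a by (auto simp: r_def)
  have e: "exp (- a * real p) = r ^ p" for p by (simp add: r_def exp_of_nat_mult[symmetric] mult.commute)
  have "(\<Sum>p=1..m. r ^ p) \<le> r / (1 - r)"
  proof (cases "m < 1")
    case True then show ?thesis using r by simp
  next
    case False
    then have "(\<Sum>p=1..m. r ^ p) = (r - r ^ Suc m) / (1 - r)" using r by (simp add: sum_gp)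
    also have "\<dots> \<le> r / (1 - r)" using r by (intro divide_right_mono) auto
    finally show ?thesis .
  qed
  also have "r / (1 - r) = 1 / (exp a - 1)"
    using a by (simp add: r_def exp_minus field_simps)
  also have "\<dots> \<le> 1 / a"
  proof -
    have "a \<le> exp a - 1" using exp_ge_add_one_self[of a] by linarith
    then show ?thesis using a by (intro divide_left_mono) auto
  qed
  finally show ?thesis unfolding e .
qed

lemma sum_inv_sq:
  assumes I: "1 \<le> I" and l: "0 < lm"
  shows "(\<Sum>i=1..n. 1 / (8 * real i ^ 2 + lm)) \<le> real I / lm + 1 / (8 * real I)"
proof -
  have main: "(\<Sum>i=1..n. 1 / (8 * real i ^ 2 + lm)) \<le> real (min n I) / lm + (if n \<le> I then 0 else (1/8) * (1 / real I - 1 / real n))"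
  proof (induction n)
    case 0 then show ?case by simp
  next
    case (Suc n)
    have t: "1 / (8 * real (Suc n) ^ 2 + lm) \<le> 1 / lm" using l by (intro divide_left_mono) (auto intro!: mult_pos_pos add_nonneg_pos)
    show ?case
    proof (cases "Suc n \<le> I")
      case True
      then have "min (Suc n) I = Suc (min n I)" "n \<le> I" by auto
      then show ?thesis using Suc t True by (simp add: add_divide_distrib)
    next
      case False
      then have "n \<ge> I" by auto
      have n1: "real n \<ge> 1" using \<open>n \<ge> I\<close> I by linarith
      have t2: "1 / (8 * real (Suc n) ^ 2 + lm) \<le> (1/8) * (1 / real n - 1 / real (Suc n))"
      proof -
        have "1 / (8 * real (Suc n) ^ 2 + lm) \<le> 1 / (8 * real (Suc n) ^ 2)"
          using l by (intro divide_left_mono) (auto intro!: mult_pos_pos add_nonneg_pos)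
        also have "\<dots> \<le> 1 / (8 * (real n * real (Suc n)))"
          using n1 by (intro divide_left_mono) (auto simp: power2_eq_square)
        also have "\<dots> = (1/8) * (1 / real n - 1 / real (Suc n))"
          using n1 by (simp add: field_simps)
        finally show ?thesis .
      qed
      have "min (Suc n) I = min n I" using False by auto
      moreover have "(if n \<le> I then 0 else (1/8) * (1 / real I - 1 / real n)) = (1/8) * (1 / real I - 1 / real n)"
        using \<open>n \<ge> I\<close> by auto
      ultimately show ?thesis using Suc t2 False by (simp add: algebra_simps)
    qed
  qed
  also have "\<dots> \<le> real I / lm + 1 / (8 * real I)"
  proof -
    have "real (min n I) / lm \<le> real I / lm" using l by (intro divide_right_mono) auto
    moreover have "(if n \<le> I then 0 else (1/8) * (1 / real I - 1 / real n)) \<le> 1 / (8 * real I)"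
      using I by auto
    ultimately show ?thesis by linarith
  qed
  finally show ?thesis .
qed

lemma sum_rev_diff: "(\<Sum>l<m. g (m - l)) = (\<Sum>p=1..(m::nat). g p)"
  by (rule sum.reindex_bij_witness[where i="\<lambda>p. m - p" and j="\<lambda>l. m - l"]) auto

definition lamg :: "real \<Rightarrow> real" where "lamg ka = 8 * ka * real (nat \<lceil>ka\<rceil> + 1) + 1"

lemma lamg_pos: "ka \<ge> 0 \<Longrightarrow> lamg ka > 0"
  unfolding lamg_def by (simp add: add_nonneg_pos)

lemma lamg_key:
  assumes ka: "ka \<ge> 0"
  shows "4 * ka * (\<Sum>i=1..n. 1 / (8 * real i ^ 2 + lamg ka)) \<le> 1"
proof -
  define I where "I = nat \<lceil>ka\<rceil> + 1"
  have I: "1 \<le> I" "ka \<le> real I" unfolding I_def by auto linarith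
  have lp: "0 < lamg ka" using lamg_pos[OF ka] .
  have "(\<Sum>i=1..n. 1 / (8 * real i ^ 2 + lamg ka)) \<le> real I / lamg ka + 1 / (8 * real I)"
    by (rule sum_inv_sq[OF I(1) lp])
  then have "4 * ka * (\<Sum>i=1..n. 1 / (8 * real i ^ 2 + lamg ka)) \<le> 4 * ka * (real I / lamg ka + 1 / (8 * real I))"
    using ka by (intro mult_left_mono) auto
  also have "\<dots> = 4 * ka * real I / lamg ka + ka / (2 * real I)"
    using I by (simp add: field_simps)
  also have "4 * ka * real I / lamg ka \<le> 1/2"
  proof -
    have "lamg ka = 8 * ka * real I + 1" unfolding lamg_def I_def by simp
    then have "8 * ka * real I \<le> lamg ka" by simp
    then show ?thesis using lp by (simp add: field_simps)
  qed
  also have "ka / (2 * real I) \<le> 1/2" using I by (simp add: field_simps)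
  finally show ?thesis by simp
qed

lemma gronwall_main:
  fixes Q :: "nat \<Rightarrow> nat \<Rightarrow> real"
  assumes N: "N > 0" and tau: "tau > 0" and ka: "ka \<ge> 0" and A: "A \<ge> 0"
    and H: "\<And>m n. n \<in> {1..N-1} \<Longrightarrow> Q m n \<le> A + (\<Sum>l<m. ka * tau * real N *
              (\<Sum>k=1..N-1. (Kern N (real (m - l) * (tau * real N ^ 2)) n k)^2 * Q l k))"
  shows "n \<in> {1..N-1} \<Longrightarrow> Q m n \<le> 2 * A * exp (lamg ka * real m * tau)"
proof (induction m arbitrary: n rule: less_induct)
  case (less m)
  define lm where "lm = lamg ka"
  have lp: "0 < lm" using lamg_pos[OF ka] by (simp add: lm_def)
  define E where "E = exp (lm * real m * tau)"
  have E1: "1 \<le> E" unfolding E_def using lp tau by simp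
  have step: "ka * tau * real N * (\<Sum>k=1..N-1. (Kern N (real (m - l) * (tau * real N ^ 2)) n k)^2 * Q l k)
      \<le> 4 * ka * tau * A * E * (\<Sum>i=1..N-1. exp (- ((8 * real i ^ 2 + lm) * tau) * real (m - l)))"
    if l: "l < m" for l
  proof -
    define s where "s = real (m - l) * (tau * real N ^ 2)"
    have s0: "0 \<le> s" using tau by (simp add: s_def)
    have "(\<Sum>k=1..N-1. (Kern N s n k)^2 * Q l k) \<le> (\<Sum>k=1..N-1. (Kern N s n k)^2 * (2 * A * exp (lm * real l * tau)))"
      by (intro sum_mono mult_left_mono) (use less.IH[OF l] in \<open>auto simp: lm_def\<close>)
    also have "\<dots> = 2 * A * exp (lm * real l * tau) * (\<Sum>k=1..N-1. (Kern N s n k)^2)"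
      by (simp add: sum_distrib_left mult.commute)
    also have "\<dots> = 2 * A * exp (lm * real l * tau) * Kern N (2 * s) n n"
      by (simp only: Kern_sq)
    also have "\<dots> \<le> 2 * A * exp (lm * real l * tau) * (2 / real N * (\<Sum>i=1..N-1. exp (2 * s * lam N i)))"
      using A by (intro mult_left_mono[OF Kern_diag_le]) simp
    also have "\<dots> \<le> 2 * A * exp (lm * real l * tau) * (2 / real N * (\<Sum>i=1..N-1. exp (- (8 * real i ^ 2) * tau * real (m - l))))"
    proof -
      have "(\<Sum>i=1..N-1. exp (2 * s * lam N i)) \<le> (\<Sum>i=1..N-1. exp (- (8 * real i ^ 2) * tau * real (m - l)))"
      proof (rule sum_mono)
        fix i assume i: "i \<in> {1..N-1}"
        have "2 * s * lam N i \<le> 2 * s * (- 4 * real i ^ 2 / real N ^ 2)"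
          using mult_left_mono[OF lam_upper[OF i], of "2 * s"] s0 by simp
        also have "\<dots> = - (8 * real i ^ 2) * tau * real (m - l)"
          using N by (simp add: s_def field_simps)
        finally show "exp (2 * s * lam N i) \<le> exp (- (8 * real i ^ 2) * tau * real (m - l))" by (simp only: exp_le_cancel_iff)
      qed
      then have "2 / real N * (\<Sum>i=1..N-1. exp (2 * s * lam N i)) \<le> 2 / real N * (\<Sum>i=1..N-1. exp (- (8 * real i ^ 2) * tau * real (m - l)))"
        by (rule mult_left_mono) auto
      moreover have "0 \<le> 2 * A * exp (lm * real l * tau)" using A by simp
      ultimately show ?thesis by (rule mult_left_mono)
    qed
    finally have *: "(\<Sum>k=1..N-1. (Kern N s n k)^2 * Q l k) \<le> 2 * A * exp (lm * real l * tau) * (2 / real N * (\<Sum>i=1..N-1. exp (- (8 * real i ^ 2) * tau * real (m - l))))" .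
    have "ka * tau * real N * (\<Sum>k=1..N-1. (Kern N s n k)^2 * Q l k) \<le> ka * tau * real N * (2 * A * exp (lm * real l * tau) * (2 / real N * (\<Sum>i=1..N-1. exp (- (8 * real i ^ 2) * tau * real (m - l)))))"
      using ka tau by (intro mult_left_mono[OF *]) auto
    also have "\<dots> = 4 * ka * tau * A * (\<Sum>i=1..N-1. exp (lm * real l * tau) * exp (- (8 * real i ^ 2) * tau * real (m - l)))"
      using N by (simp add: sum_distrib_left field_simps)
    also have "(\<Sum>i=1..N-1. exp (lm * real l * tau) * exp (- (8 * real i ^ 2) * tau * real (m - l)))
        = (\<Sum>i=1..N-1. E * exp (- ((8 * real i ^ 2 + lm) * tau) * real (m - l)))"
    proof (intro sum.cong refl)
      fix i
      have "lm * real l * tau + - (8 * real i ^ 2) * tau * real (m - l) = lm * real m * tau + - ((8 * real i ^ 2 + lm) * tau) * real (m - l)"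
        using l by (simp add: of_nat_diff algebra_simps)
      then show "exp (lm * real l * tau) * exp (- (8 * real i ^ 2) * tau * real (m - l)) = E * exp (- ((8 * real i ^ 2 + lm) * tau) * real (m - l))"
        unfolding E_def by (simp add: exp_add[symmetric])
    qed
    finally show ?thesis unfolding s_def by (simp add: sum_distrib_left mult.assoc)
  qed
  have "Q m n \<le> A + (\<Sum>l<m. ka * tau * real N * (\<Sum>k=1..N-1. (Kern N (real (m - l) * (tau * real N ^ 2)) n k)^2 * Q l k))"
    by (rule H[OF less.prems])
  also have "(\<Sum>l<m. ka * tau * real N * (\<Sum>k=1..N-1. (Kern N (real (m - l) * (tau * real N ^ 2)) n k)^2 * Q l k))
      \<le> (\<Sum>l<m. 4 * ka * tau * A * E * (\<Sum>i=1..N-1. exp (- ((8 * real i ^ 2 + lm) * tau) * real (m - l))))"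
    by (intro sum_mono step) auto
  also have "\<dots> = 4 * ka * tau * A * E * (\<Sum>i=1..N-1. (\<Sum>l<m. exp (- ((8 * real i ^ 2 + lm) * tau) * real (m - l))))"
    unfolding sum_distrib_left[symmetric] by (subst sum.swap) (rule refl)
  also have "\<dots> \<le> 4 * ka * tau * A * E * (\<Sum>i=1..N-1. 1 / ((8 * real i ^ 2 + lm) * tau))"
  proof (intro mult_left_mono sum_mono)
    fix i
    have "(\<Sum>l<m. exp (- ((8 * real i ^ 2 + lm) * tau) * real (m - l))) = (\<Sum>p=1..m. exp (- ((8 * real i ^ 2 + lm) * tau) * real p))"
      by (rule sum_rev_diff)
    also have "\<dots> \<le> 1 / ((8 * real i ^ 2 + lm) * tau)"
      by (rule geom_exp_sum) (use lp tau in \<open>auto intro!: mult_pos_pos add_nonneg_pos\<close>)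
    finally show "(\<Sum>l<m. exp (- ((8 * real i ^ 2 + lm) * tau) * real (m - l))) \<le> 1 / ((8 * real i ^ 2 + lm) * tau)" .
  qed (use ka tau A E1 in auto)
  also have "\<dots> = A * E * (4 * ka * (\<Sum>i=1..N-1. 1 / (8 * real i ^ 2 + lm)))"
    unfolding sum_distrib_left
  proof (intro sum.cong refl)
    fix i
    have g: "4 * ka * tau * A * E * (x * (1 / tau)) = A * E * (4 * ka * x)" for x
      using tau by (simp add: field_simps)
    have "1 / ((8 * real i ^ 2 + lm) * tau) = (1 / (8 * real i ^ 2 + lm)) * (1 / tau)" by simp
    then show "4 * ka * tau * A * E * (1 / ((8 * real i ^ 2 + lm) * tau)) = A * E * (4 * ka * (1 / (8 * real i ^ 2 + lm)))"
      using g by metis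
  qed
  also have "\<dots> \<le> A * E * 1"
    using lamg_key[OF ka, of "N-1"] A E1 by (intro mult_left_mono) (auto simp: lm_def)
  finally have "Q m n \<le> A + A * E" by simp
  also have "\<dots> \<le> 2 * A * E"
  proof -
    have "A * 1 \<le> A * E" using A E1 by (rule mult_left_mono[rotated])
    then show ?thesis by simp
  qed
  finally show ?case by (simp add: E_def lm_def)
qed



lemma normal_exp_shift:
  assumes s: "0 < s"
  shows "normal_density 0 s x * exp x = exp (s^2 / 2) * normal_density (s^2) s x"
proof -
  have "- (x - 0)\<^sup>2 / (2 * s\<^sup>2) + x = s^2 / 2 + (- (x - s^2)\<^sup>2 / (2 * s\<^sup>2))"
    using s by (simp add: field_simps power2_eq_square)
  then show ?thesis
    unfolding normal_density_def by (simp add: exp_add[symmetric] mult.commute mult.left_commute)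
qed

lemma gauss_mgf:
  assumes P: "prob_space P" and G: "centered_gaussian P Y v"
  shows "integrable P (\<lambda>\<omega>. exp (Y \<omega>)) \<and> prob_space.expectation P (\<lambda>\<omega>. exp (Y \<omega>)) = exp (v / 2)"
proof -
  interpret prob_space P by (rule P)
  have Ym: "Y \<in> borel_measurable P" using G by (simp add: centered_gaussian_def)
  from G consider "v = 0" "AE \<omega> in P. Y \<omega> = 0" | "v > 0" "distributed P lborel Y (normal_density 0 (sqrt v))"
    unfolding centered_gaussian_def by blast
  then show ?thesis
  proof cases
    case 1
    have ae: "AE \<omega> in P. exp (Y \<omega>) = 1" using 1(2) by eventually_elim simp
    have "integrable P (\<lambda>\<omega>. exp (Y \<omega>))"
      by (rule integrable_cong_AE_imp[OF _ _ ae[THEN AE_mp, OF AE_I2]]) (use Ym in auto)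
    moreover have "expectation (\<lambda>\<omega>. exp (Y \<omega>)) = expectation (\<lambda>\<omega>. 1)"
      by (rule integral_cong_AE) (use Ym ae in auto)
    ultimately show ?thesis using 1 by (simp add: prob_space)
  next
    case 2
    define s where "s = sqrt v"
    have s: "0 < s" "s^2 = v" using 2 by (auto simp: s_def)
    have D: "distributed P lborel Y (normal_density 0 s)" using 2 by (simp add: s_def)
    have eq: "(\<lambda>x. normal_density 0 s x * exp x) = (\<lambda>x. exp (s^2 / 2) * normal_density (s^2) s x)"
      using normal_exp_shift[OF s(1)] by auto
    have "integrable lborel (\<lambda>x. normal_density 0 s x * exp x)"
      unfolding eq using s by (intro integrable_mult_right integrable_normal_density) auto
    then have i: "integrable P (\<lambda>\<omega>. exp (Y \<omega>))"
      using distributed_integrable[OF D, of exp] by simp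
    have "(\<integral>x. normal_density 0 s x * exp x \<partial>lborel) = expectation (\<lambda>\<omega>. exp (Y \<omega>))"
      by (rule distributed_integral[OF D]) auto
    moreover have "(\<integral>x. normal_density 0 s x * exp x \<partial>lborel) = exp (s^2 / 2)"
      unfolding eq using s integral_normal_density[of s "s^2"] by simp
    ultimately show ?thesis using i s by simp
  qed
qed

lemma var8:
  fixes r s x1 x2 y1 y2 A B :: real
  assumes "s \<le> r" "x1 \<le> x2" "x2 \<le> y1" "y1 \<le> y2"
  shows "(\<Sum>i<8. \<Sum>j<8. ([A,-A,-A,A,B,-B,-B,B] ! i) * ([A,-A,-A,A,B,-B,-B,B] ! j)
            * min ([r,r,s,s,r,r,s,s] ! i) ([r,r,s,s,r,r,s,s] ! j)
            * min ([x2,x1,x2,x1,y2,y1,y2,y1] ! i) ([x2,x1,x2,x1,y2,y1,y2,y1] ! j))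
       = (r - s) * (A^2 * (x2 - x1) + B^2 * (y2 - y1))"
proof -
  have m: "min r s = s" "min s r = s" "min x2 x1 = x1" "min x1 x2 = x1"
     "min y2 y1 = y1" "min y1 y2 = y1" "min x2 y2 = x2" "min y2 x2 = x2" "min x2 y1 = x2" "min y1 x2 = x2"
     "min x1 y2 = x1" "min y2 x1 = x1" "min x1 y1 = x1" "min y1 x1 = x1"
    using assms by (auto simp: min_def)
  show ?thesis
    by (simp add: numeral_eq_Suc lessThan_Suc m power2_eq_square) (simp add: algebra_simps)
qed

lemma var4:
  fixes r s x1 x2 C :: real
  assumes "s \<le> r" "x1 \<le> x2"
  shows "(\<Sum>i<4. \<Sum>j<4. ([C,-C,-C,C] ! i) * ([C,-C,-C,C] ! j)
            * min ([r,r,s,s] ! i) ([r,r,s,s] ! j)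
            * min ([x2,x1,x2,x1] ! i) ([x2,x1,x2,x1] ! j))
       = (r - s) * (C^2 * (x2 - x1))"
proof -
  have m: "min r s = s" "min s r = s" "min x2 x1 = x1" "min x1 x2 = x1"
    using assms by (auto simp: min_def)
  show ?thesis
    by (simp add: numeral_eq_Suc lessThan_Suc m power2_eq_square) (simp add: algebra_simps)
qed

definition Zinc :: "(real \<Rightarrow> real \<Rightarrow> 'a \<Rightarrow> real) \<Rightarrow> nat \<Rightarrow> real \<Rightarrow> real \<Rightarrow> nat \<Rightarrow> 'a \<Rightarrow> real" where
  "Zinc W N s r k \<omega> = WN W N r k \<omega> - WN W N s k \<omega>"

definition qv :: "nat \<Rightarrow> nat \<Rightarrow> real \<Rightarrow> real \<Rightarrow> real \<Rightarrow> real" where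
  "qv k j a b t = (if k = j then (a + b)^2 else a^2 + b^2) * t"

lemma bs_gauss:
  fixes kk :: nat and ts xs c :: "nat \<Rightarrow> real"
  assumes "brownian_sheet P F W" "\<forall>i<kk. 0 \<le> ts i \<and> 0 \<le> xs i \<and> xs i \<le> 1"
  shows "centered_gaussian P (\<lambda>\<omega>. \<Sum>i<kk. c i * W (ts i) (xs i) \<omega>)
          (\<Sum>i<kk. \<Sum>j<kk. c i * c j * min (ts i) (ts j) * min (xs i) (xs j))"
  using assms(1)[unfolded brownian_sheet_def, THEN conjunct2, THEN conjunct2, THEN conjunct2, THEN conjunct1,
      THEN spec[of _ kk], THEN spec[of _ ts], THEN spec[of _ xs], THEN spec[of _ c], THEN mp, OF assms(2)] .

lemma mgf_lt:
  assumes P: "prob_space P" and BS: "brownian_sheet P F W" and st: "0 \<le> s" "s \<le> r"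
    and N: "N > 0" and kj: "k < j" "j < N"
  shows "integrable P (\<lambda>\<omega>. exp (a * Zinc W N s r k \<omega> + b * Zinc W N s r j \<omega>)) \<and>
         prob_space.expectation P (\<lambda>\<omega>. exp (a * Zinc W N s r k \<omega> + b * Zinc W N s r j \<omega>))
           = exp ((a^2 + b^2) * (r - s) / 2)"
proof -
  define x1 where "x1 = real k / real N"
  define x2 where "x2 = real (Suc k) / real N"
  define y1 where "y1 = real j / real N"
  define y2 where "y2 = real (Suc j) / real N"
  define A where "A = a * sqrt (real N)"
  define B where "B = b * sqrt (real N)"
  define ts where "ts = (\<lambda>i. [r,r,s,s,r,r,s,s] ! i)"
  define xs where "xs = (\<lambda>i. [x2,x1,x2,x1,y2,y1,y2,y1] ! i)"
  define c where "c = (\<lambda>i. [A,-A,-A,A,B,-B,-B,B] ! i)"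
  have ord: "x1 \<le> x2" "x2 \<le> y1" "y1 \<le> y2" using kj N
    by (auto simp: x1_def x2_def y1_def y2_def divide_right_mono)
  have rng: "0 \<le> x1" "y2 \<le> 1" using kj N by (auto simp: x1_def y2_def)
  have cond: "\<forall>i<8. 0 \<le> ts i \<and> 0 \<le> xs i \<and> xs i \<le> 1"
    using st ord rng by (simp add: numeral_eq_Suc less_Suc_eq ts_def xs_def)
  have G: "centered_gaussian P (\<lambda>\<omega>. \<Sum>i<8. c i * W (ts i) (xs i) \<omega>)
          (\<Sum>i<8. \<Sum>j<8. c i * c j * min (ts i) (ts j) * min (xs i) (xs j))"
    by (rule bs_gauss[OF BS cond])
  have V: "(\<Sum>i<8. \<Sum>j<8. c i * c j * min (ts i) (ts j) * min (xs i) (xs j)) = (a^2 + b^2) * (r - s)"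
  proof -
    have "(\<Sum>i<8. \<Sum>j<8. c i * c j * min (ts i) (ts j) * min (xs i) (xs j)) = (r - s) * (A^2 * (x2 - x1) + B^2 * (y2 - y1))"
      unfolding c_def ts_def xs_def by (rule var8[OF st(2) ord])
    also have "\<dots> = (a^2 + b^2) * (r - s)"
    proof -
      have "A^2 = a^2 * real N" "B^2 = b^2 * real N" by (simp_all add: A_def B_def power_mult_distrib)
      then show ?thesis using N by (simp add: x1_def x2_def y1_def y2_def field_simps)
    qed
    finally show ?thesis .
  qed
  have Y: "(\<Sum>i<8. c i * W (ts i) (xs i) \<omega>) = a * Zinc W N s r k \<omega> + b * Zinc W N s r j \<omega>" for \<omega>
    by (simp add: numeral_eq_Suc lessThan_Suc c_def ts_def xs_def Zinc_def WN_def A_def B_def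
        x1_def x2_def y1_def y2_def algebra_simps)
  show ?thesis using gauss_mgf[OF P G] unfolding V by (simp only: Y)
qed

lemma mgf_eq:
  assumes P: "prob_space P" and BS: "brownian_sheet P F W" and st: "0 \<le> s" "s \<le> r"
    and N: "N > 0" and k: "k < N"
  shows "integrable P (\<lambda>\<omega>. exp (a * Zinc W N s r k \<omega> + b * Zinc W N s r k \<omega>)) \<and>
         prob_space.expectation P (\<lambda>\<omega>. exp (a * Zinc W N s r k \<omega> + b * Zinc W N s r k \<omega>))
           = exp ((a + b)^2 * (r - s) / 2)"
proof -
  define x1 where "x1 = real k / real N"
  define x2 where "x2 = real (Suc k) / real N"
  define C where "C = (a + b) * sqrt (real N)"
  define ts where "ts = (\<lambda>i. [r,r,s,s] ! i)"
  define xs where "xs = (\<lambda>i. [x2,x1,x2,x1] ! i)"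
  define c where "c = (\<lambda>i. [C,-C,-C,C] ! i)"
  have ord: "x1 \<le> x2" using N by (auto simp: x1_def x2_def divide_right_mono)
  have rng: "0 \<le> x1" "x2 \<le> 1" using k N by (auto simp: x1_def x2_def)
  have cond: "\<forall>i<4. 0 \<le> ts i \<and> 0 \<le> xs i \<and> xs i \<le> 1"
    using st ord rng by (simp add: numeral_eq_Suc less_Suc_eq ts_def xs_def)
  have G: "centered_gaussian P (\<lambda>\<omega>. \<Sum>i<4. c i * W (ts i) (xs i) \<omega>)
          (\<Sum>i<4. \<Sum>j<4. c i * c j * min (ts i) (ts j) * min (xs i) (xs j))"
    by (rule bs_gauss[OF BS cond])
  have V: "(\<Sum>i<4. \<Sum>j<4. c i * c j * min (ts i) (ts j) * min (xs i) (xs j)) = (a + b)^2 * (r - s)"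
  proof -
    have "(\<Sum>i<4. \<Sum>j<4. c i * c j * min (ts i) (ts j) * min (xs i) (xs j)) = (r - s) * (C^2 * (x2 - x1))"
      unfolding c_def ts_def xs_def by (rule var4[OF st(2) ord])
    also have "\<dots> = (a + b)^2 * (r - s)"
    proof -
      have "C^2 = (a + b)^2 * real N" by (simp add: C_def power_mult_distrib)
      then show ?thesis using N by (simp add: x1_def x2_def field_simps)
    qed
    finally show ?thesis .
  qed
  have Y: "(\<Sum>i<4. c i * W (ts i) (xs i) \<omega>) = a * Zinc W N s r k \<omega> + b * Zinc W N s r k \<omega>" for \<omega>
    by (simp add: numeral_eq_Suc lessThan_Suc c_def ts_def xs_def Zinc_def WN_def C_def
        x1_def x2_def algebra_simps)
  show ?thesis using gauss_mgf[OF P G] unfolding V by (simp only: Y)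
qed

lemma mgf_pair:
  assumes P: "prob_space P" and BS: "brownian_sheet P F W" and st: "0 \<le> s" "s \<le> r"
    and N: "N > 0" and kj: "k < N" "j < N"
  shows "integrable P (\<lambda>\<omega>. exp (a * Zinc W N s r k \<omega> + b * Zinc W N s r j \<omega>)) \<and>
         prob_space.expectation P (\<lambda>\<omega>. exp (a * Zinc W N s r k \<omega> + b * Zinc W N s r j \<omega>))
           = exp (qv k j a b (r - s) / 2)"
proof (cases k j rule: linorder_cases)
  case less then show ?thesis using mgf_lt[OF P BS st N less kj(2)] by (simp add: qv_def)
next
  case equal then show ?thesis using mgf_eq[OF P BS st N kj(1)] by (simp add: qv_def)
next
  case greater
  have "(\<lambda>\<omega>. a * Zinc W N s r k \<omega> + b * Zinc W N s r j \<omega>) = (\<lambda>\<omega>. b * Zinc W N s r j \<omega> + a * Zinc W N s r k \<omega>)"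
    by (simp add: add.commute)
  then show ?thesis using mgf_lt[OF P BS st N greater kj(1), of b a] greater by (simp add: qv_def add.commute)
qed



abbreviation "PX \<equiv> (Pi\<^sub>M (UNIV :: nat set) (\<lambda>_. (borel :: real measure)))"

lemma bs_filtration: "brownian_sheet P F W \<Longrightarrow> filtration (space P) F"
  by (simp add: brownian_sheet_def)

lemma bs_sub: "brownian_sheet P F W \<Longrightarrow> sets (F t) \<subseteq> sets P"
  by (simp add: brownian_sheet_def)

lemma bs_meas: "brownian_sheet P F W \<Longrightarrow> 0 \<le> t \<Longrightarrow> 0 \<le> x \<Longrightarrow> x \<le> 1 \<Longrightarrow> W t x \<in> borel_measurable (F t)"
  by (simp add: brownian_sheet_def)

lemma bs_indep: "brownian_sheet P F W \<Longrightarrow> 0 \<le> s \<Longrightarrow>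
   prob_space.indep_set P (sets (F s))
          (sigma_sets (space P)
             (\<Union>r\<in>{s..}. \<Union>x\<in>{0..1}.
                {(\<lambda>\<omega>. W r x \<omega> - W s x \<omega>) -` B \<inter> space P | B. B \<in> sets borel}))"
  by (drule conjunct2[OF conjunct2[OF conjunct2[OF conjunct2[OF iffD1[OF brownian_sheet_def]]]], THEN spec[of _ s]]) simp

lemma subalg_F: "brownian_sheet P F W \<Longrightarrow> subalgebra P (F t)"
  unfolding subalgebra_def using bs_sub[of P F W t] filtration.space_F[OF bs_filtration[of P F W]] by auto

lemma meas_F_to_P: "brownian_sheet P F W \<Longrightarrow> f \<in> measurable (F t) N \<Longrightarrow> f \<in> measurable P N"
  by (rule measurable_from_subalg[OF subalg_F])

lemma meas_F_mono: "brownian_sheet P F W \<Longrightarrow> s \<le> t \<Longrightarrow> f \<in> measurable (F s) N \<Longrightarrow> f \<in> measurable (F t) N"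
proof -
  assume bs: "brownian_sheet P F W" and st: "s \<le> t" and f: "f \<in> measurable (F s) N"
  interpret filtration "space P" F by (rule bs_filtration[OF bs])
  have "subalgebra (F t) (F s)" unfolding subalgebra_def using sets_F_mono[OF st] space_F by auto
  then show ?thesis using f by (rule measurable_from_subalg)
qed

lemma W_meas_P: "brownian_sheet P F W \<Longrightarrow> 0 \<le> t \<Longrightarrow> 0 \<le> x \<Longrightarrow> x \<le> 1 \<Longrightarrow> W t x \<in> borel_measurable P"
  using meas_F_to_P bs_meas by blast

lemma Zinc_eq: "Zinc W N s r k \<omega> = sqrt (real N) * ((W r (real (Suc k) / real N) \<omega> - W s (real (Suc k) / real N) \<omega>)
    - (W r (real k / real N) \<omega> - W s (real k / real N) \<omega>))"
  unfolding Zinc_def WN_def by (simp add: algebra_simps)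

lemma X_meas_PiM:
  assumes "\<And>i. (\<lambda>\<omega>. X \<omega> i) \<in> borel_measurable M"
  shows "X \<in> measurable M PX"
proof -
  have "(\<lambda>\<omega> i. X \<omega> i) \<in> measurable M PX"
    by (rule measurable_PiM_single') (use assms in auto)
  then show ?thesis by simp
qed

lemma Zinc_meas:
  assumes "(\<lambda>\<omega>. W r (real k / real N) \<omega> - W s (real k / real N) \<omega>) \<in> borel_measurable M"
    and "(\<lambda>\<omega>. W r (real (Suc k) / real N) \<omega> - W s (real (Suc k) / real N) \<omega>) \<in> borel_measurable M"
  shows "Zinc W N s r k \<in> borel_measurable M"
proof -
  have "Zinc W N s r k = (\<lambda>\<omega>. sqrt (real N) * ((W r (real (Suc k) / real N) \<omega> - W s (real (Suc k) / real N) \<omega>)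
    - (W r (real k / real N) \<omega> - W s (real k / real N) \<omega>)))"
    by (rule ext) (rule Zinc_eq)
  then show ?thesis using assms by simp
qed

lemma Zpair_meas:
  assumes "Zinc W N s r k \<in> borel_measurable M" "Zinc W N s r j \<in> borel_measurable M"
  shows "(\<lambda>\<omega> (i::nat). if i = 0 then Zinc W N s r k \<omega> else Zinc W N s r j \<omega>) \<in> measurable M PX"
proof (rule X_meas_PiM)
  fix i :: nat
  show "(\<lambda>\<omega>. if i = 0 then Zinc W N s r k \<omega> else Zinc W N s r j \<omega>) \<in> borel_measurable M"
    using assms by (cases "i = 0") auto
qed

lemma indep_XZ:
  assumes P: "prob_space P" and BS: "brownian_sheet P F W" and st: "0 \<le> s" "s \<le> r"
    and N: "N > 0" and kj: "k < N" "j < N"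
    and X: "\<And>i. (\<lambda>\<omega>. X \<omega> i) \<in> borel_measurable (F s)"
  shows "prob_space.indep_var P PX X PX (\<lambda>\<omega> (i::nat). if i = 0 then Zinc W N s r k \<omega> else Zinc W N s r j \<omega>)"
proof -
  interpret prob_space P by (rule P)
  interpret filtration "space P" F by (rule bs_filtration[OF BS])
  define G where "G = (\<Union>r\<in>{s..}. \<Union>x\<in>{0..1::real}.
                {(\<lambda>\<omega>. W r x \<omega> - W s x \<omega>) -` B \<inter> space P | B. B \<in> sets borel})"
  define Z where "Z = (\<lambda>\<omega> (i::nat). if i = 0 then Zinc W N s r k \<omega> else Zinc W N s r j \<omega>)"
  have GP: "G \<subseteq> Pow (space P)" unfolding G_def by auto
  have ind: "indep_set (sets (F s)) (sigma_sets (space P) G)"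
    using bs_indep[OF BS st(1)] unfolding G_def .
  have XF: "X \<in> measurable (F s) PX" by (rule X_meas_PiM[OF X])
  have XP: "X \<in> measurable P PX" by (rule meas_F_to_P[OF BS XF])
  have Inc: "(\<lambda>\<omega>. W r x \<omega> - W s x \<omega>) \<in> borel_measurable (sigma (space P) G)" if x: "0 \<le> x" "x \<le> 1" for x
  proof (rule measurableI)
    fix \<omega> assume "\<omega> \<in> space (sigma (space P) G)"
    show "W r x \<omega> - W s x \<omega> \<in> space borel" by simp
  next
    fix B :: "real set" assume B: "B \<in> sets borel"
    have "(\<lambda>\<omega>. W r x \<omega> - W s x \<omega>) -` B \<inter> space P \<in> G"
      unfolding G_def using st x B by (intro UN_I[of r] UN_I[of x]) auto
    then show "(\<lambda>\<omega>. W r x \<omega> - W s x \<omega>) -` B \<inter> space (sigma (space P) G) \<in> sets (sigma (space P) G)"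
      using GP by (simp add: sigma_sets.Basic)
  qed
  have IncP: "(\<lambda>\<omega>. W r x \<omega> - W s x \<omega>) \<in> borel_measurable P" if x: "0 \<le> x" "x \<le> 1" for x
  proof -
    have "W r x \<in> borel_measurable P" "W s x \<in> borel_measurable P"
      using W_meas_P[OF BS _ x] st by auto
    then show ?thesis by measurable
  qed
  have x01: "0 \<le> real k / real N" "real k / real N \<le> 1" "0 \<le> real (Suc k) / real N" "real (Suc k) / real N \<le> 1"
    "0 \<le> real j / real N" "real j / real N \<le> 1" "0 \<le> real (Suc j) / real N" "real (Suc j) / real N \<le> 1"
    using kj N by auto
  have ZS: "Z \<in> measurable (sigma (space P) G) PX"
    unfolding Z_def by (intro Zpair_meas Zinc_meas Inc x01)
  have ZP: "Z \<in> measurable P PX"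
    unfolding Z_def by (intro Zpair_meas Zinc_meas IncP x01)
  have S1: "sigma_sets (space P) {X -` A \<inter> space P | A. A \<in> sets PX} \<subseteq> sets (F s)"
  proof (rule sigma_algebra.sigma_sets_subset)
    show "sigma_algebra (space P) (sets (F s))" using sets.sigma_algebra_axioms[of "F s"] space_F by simp
    show "{X -` A \<inter> space P | A. A \<in> sets PX} \<subseteq> sets (F s)"
      using XF space_F[of s] by (auto simp: measurable_def)
  qed
  have S2: "sigma_sets (space P) {Z -` A \<inter> space P | A. A \<in> sets PX} \<subseteq> sigma_sets (space P) G"
  proof (rule sigma_algebra.sigma_sets_subset)
    show "sigma_algebra (space P) (sigma_sets (space P) G)" using GP by (rule sigma_algebra_sigma_sets)
    show "{Z -` A \<inter> space P | A. A \<in> sets PX} \<subseteq> sigma_sets (space P) G"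
      using ZS GP by (auto simp: measurable_def)
  qed
  have "indep_set (sigma_sets (space P) {X -` A \<inter> space P | A. A \<in> sets PX})
                  (sigma_sets (space P) {Z -` A \<inter> space P | A. A \<in> sets PX})"
    using ind unfolding indep_set_def
    by (rule indep_sets_mono_sets) (use S1 S2 in \<open>auto split: bool.split\<close>)
  then show ?thesis unfolding indep_var_eq Z_def[symmetric] using XP ZP by auto
qed

lemma freeze:
  assumes P: "prob_space P" and BS: "brownian_sheet P F W" and st: "0 \<le> s" "s \<le> r"
    and N: "N > 0" and kj: "k < N" "j < N"
    and X: "\<And>i. (\<lambda>\<omega>. X \<omega> i) \<in> borel_measurable (F s)"
    and hm[measurable]: "h \<in> borel_measurable PX" and am[measurable]: "a \<in> borel_measurable PX"
    and bm[measurable]: "b \<in> borel_measurable PX"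
    and int: "integrable P (\<lambda>\<omega>. \<bar>h (X \<omega>)\<bar> * exp (qv k j (a (X \<omega>)) (b (X \<omega>)) (r - s) / 2))"
  shows "integrable P (\<lambda>\<omega>. h (X \<omega>) * exp (a (X \<omega>) * Zinc W N s r k \<omega> + b (X \<omega>) * Zinc W N s r j \<omega>))"
    and "prob_space.expectation P (\<lambda>\<omega>. h (X \<omega>) * exp (a (X \<omega>) * Zinc W N s r k \<omega> + b (X \<omega>) * Zinc W N s r j \<omega>))
       = prob_space.expectation P (\<lambda>\<omega>. h (X \<omega>) * exp (qv k j (a (X \<omega>)) (b (X \<omega>)) (r - s) / 2))"
proof -
  interpret prob_space P by (rule P)
  define Z where "Z = (\<lambda>\<omega> (i::nat). if i = 0 then Zinc W N s r k \<omega> else Zinc W N s r j \<omega>)"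
  have ind: "indep_var PX X PX Z" unfolding Z_def by (rule indep_XZ[OF P BS st N kj X])
  have XP[measurable]: "X \<in> measurable P PX" using indep_var_rv1[OF ind] .
  have ZP[measurable]: "Z \<in> measurable P PX" using indep_var_rv2[OF ind] .
  define MX where "MX = distr P PX X"
  define MZ where "MZ = distr P PX Z"
  interpret MX: prob_space MX unfolding MX_def by (rule prob_space_distr) simp
  interpret MZ: prob_space MZ unfolding MZ_def by (rule prob_space_distr) simp
  interpret XZ: pair_prob_space MX MZ ..
  have prod: "MX \<Otimes>\<^sub>M MZ = distr P (PX \<Otimes>\<^sub>M PX) (\<lambda>\<omega>. (X \<omega>, Z \<omega>))"
    using ind unfolding indep_var_distribution_eq MX_def MZ_def by simp
  define q where "q = (\<lambda>x. exp (qv k j (a x) (b x) (r - s) / 2))"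
  have qm[measurable]: "q \<in> borel_measurable PX" unfolding q_def qv_def by measurable
  define \<Phi> where "\<Phi> = (\<lambda>p::(nat \<Rightarrow> real) \<times> (nat \<Rightarrow> real). h (fst p) * exp (a (fst p) * snd p 0 + b (fst p) * snd p 1))"
  have \<Phi>m[measurable]: "\<Phi> \<in> borel_measurable (PX \<Otimes>\<^sub>M PX)" unfolding \<Phi>_def by measurable
  have sMX: "sets MX = sets PX" "sets MZ = sets PX" by (simp_all add: MX_def MZ_def)
  have \<Phi>m': "\<Phi> \<in> borel_measurable (MX \<Otimes>\<^sub>M MZ)"
    using \<Phi>m by (simp add: measurable_cong_sets[OF sets_pair_measure_cong[OF sMX] refl])
  have mgf: "integrable MZ (\<lambda>z. exp (c * z 0 + d * z 1)) \<and> (\<integral>z. exp (c * z 0 + d * z 1) \<partial>MZ) = exp (qv k j c d (r - s) / 2)" for c d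
  proof -
    define f where "f = (\<lambda>z::nat \<Rightarrow> real. exp (c * z 0 + d * z 1))"
    have fm: "f \<in> borel_measurable PX" unfolding f_def by measurable
    have e: "(\<lambda>\<omega>. f (Z \<omega>)) = (\<lambda>\<omega>. exp (c * Zinc W N s r k \<omega> + d * Zinc W N s r j \<omega>))"
      by (simp add: Z_def f_def)
    have "integrable MZ f \<longleftrightarrow> integrable P (\<lambda>\<omega>. f (Z \<omega>))"
      unfolding MZ_def by (rule integrable_distr_eq[OF ZP fm])
    moreover have "integral\<^sup>L MZ f = expectation (\<lambda>\<omega>. f (Z \<omega>))"
      unfolding MZ_def by (rule integral_distr[OF ZP fm])
    ultimately show ?thesis using mgf_pair[OF P BS st N kj, of c d] unfolding e by (simp add: f_def)
  qed
  have inner: "(\<integral>z. \<Phi> (x, z) \<partial>MZ) = h x * q x" for x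
    using mgf[of "a x" "b x"] by (simp add: \<Phi>_def q_def)
  have inner_norm: "(\<integral>z. norm (\<Phi> (x, z)) \<partial>MZ) = \<bar>h x\<bar> * q x" for x
    using mgf[of "a x" "b x"] by (simp add: \<Phi>_def q_def abs_mult)
  have intMX: "integrable MX (\<lambda>x. \<bar>h x\<bar> * q x)"
  proof -
    have "(\<lambda>x. \<bar>h x\<bar> * q x) \<in> borel_measurable PX" by measurable
    then show ?thesis unfolding MX_def using int by (simp add: integrable_distr_eq[OF XP] q_def)
  qed
  have intP: "integrable (MX \<Otimes>\<^sub>M MZ) \<Phi>"
  proof (rule XZ.Fubini_integrable[OF \<Phi>m'])
    show "integrable MX (\<lambda>x. \<integral>y. norm (\<Phi> (x, y)) \<partial>MZ)" unfolding inner_norm by (rule intMX)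
    show "AE x in MX. integrable MZ (\<lambda>y. \<Phi> (x, y))"
      using mgf by (simp add: \<Phi>_def)
  qed
  have eqf: "(\<lambda>\<omega>. \<Phi> (X \<omega>, Z \<omega>)) = (\<lambda>\<omega>. h (X \<omega>) * exp (a (X \<omega>) * Zinc W N s r k \<omega> + b (X \<omega>) * Zinc W N s r j \<omega>))"
    by (simp add: \<Phi>_def Z_def)
  show "integrable P (\<lambda>\<omega>. h (X \<omega>) * exp (a (X \<omega>) * Zinc W N s r k \<omega> + b (X \<omega>) * Zinc W N s r j \<omega>))"
    using intP unfolding prod eqf[symmetric] by (simp add: integrable_distr_eq)
  have "expectation (\<lambda>\<omega>. h (X \<omega>) * exp (a (X \<omega>) * Zinc W N s r k \<omega> + b (X \<omega>) * Zinc W N s r j \<omega>))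
      = integral\<^sup>L (MX \<Otimes>\<^sub>M MZ) \<Phi>"
    unfolding prod eqf[symmetric] by (simp add: integral_distr)
  also have "\<dots> = (\<integral>x. (\<integral>z. \<Phi> (x, z) \<partial>MZ) \<partial>MX)" by (rule XZ.integral_fst'[OF intP, symmetric])
  also have "\<dots> = (\<integral>x. h x * q x \<partial>MX)" unfolding inner ..
  also have "\<dots> = expectation (\<lambda>\<omega>. h (X \<omega>) * q (X \<omega>))" unfolding MX_def by (simp add: integral_distr)
  finally show "expectation (\<lambda>\<omega>. h (X \<omega>) * exp (a (X \<omega>) * Zinc W N s r k \<omega> + b (X \<omega>) * Zinc W N s r j \<omega>))
       = expectation (\<lambda>\<omega>. h (X \<omega>) * exp (qv k j (a (X \<omega>)) (b (X \<omega>)) (r - s) / 2))"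
    by (simp add: q_def)
qed



locale LTset =
  fixes P :: "'a measure" and F :: "real \<Rightarrow> 'a measure" and W :: "real \<Rightarrow> real \<Rightarrow> 'a \<Rightarrow> real"
    and g u0 :: "real \<Rightarrow> real" and T :: real and M N :: nat and Lf :: real
  assumes P: "prob_space P" and BS: "brownian_sheet P F W" and T: "T > 0" and M: "M > 0" and N: "N > 0"
    and fm: "fq g \<in> borel_measurable borel" and fb: "\<And>v. \<bar>fq g v\<bar> \<le> Lf"
begin

definition "tau = T / real M"
definition "ts m = real m * tau"
definition "U m k \<omega> = LT g u0 W T M N m k \<omega>"
definition "Xv m \<omega> = (\<lambda>k. if k \<in> {1..N-1} then U m k \<omega> else 0)"
definition "xi m r k \<omega> = exp (sqrt (real N) * fq g (U m k \<omega>) * Zinc W N (ts m) r k \<omega>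
     - real N * (fq g (U m k \<omega>))^2 * (r - ts m) / 2)"

lemma tau_pos: "tau > 0" using T M by (simp add: tau_def)
lemma ts_nonneg: "ts m \<ge> 0" using tau_pos by (simp add: ts_def)
lemma ts_mono: "m \<le> m' \<Longrightarrow> ts m \<le> ts m'" using tau_pos by (simp add: ts_def mult_right_mono)
lemma ts_Suc: "ts (Suc m) = ts m + tau" by (simp add: ts_def algebra_simps)
lemma Lf_nonneg: "Lf \<ge> 0" using fb[of 0] by linarith

lemma U_Suc:
  assumes n: "n \<in> {1..N-1}"
  shows "U (Suc m) n \<omega> = (\<Sum>k=1..N-1. Kern N (tau * real N ^ 2) n k * (xi m (ts (Suc m)) k \<omega> * U m k \<omega>))"
proof -
  have "U (Suc m) n \<omega> = expD N (tau * real N ^ 2) (\<lambda>k. xi m (ts (Suc m)) k \<omega> * U m k \<omega>) n"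
  proof -
    have x: "xi m (ts (Suc m)) k \<omega> = exp (sqrt (real N) * fq g (U m k \<omega>) *
        (WN W N (ts (Suc m)) k \<omega> - WN W N (ts m) k \<omega>) - real N * (fq g (U m k \<omega>))^2 * tau / 2)" for k
      unfolding xi_def Zinc_def by (simp add: ts_Suc)
    show ?thesis unfolding x unfolding U_def LT.simps ts_def tau_def by (simp add: mult.commute)
  qed
  also have "\<dots> = (\<Sum>k=1..N-1. Kern N (tau * real N ^ 2) n k * (xi m (ts (Suc m)) k \<omega> * U m k \<omega>))"
    by (rule expD_spectral[OF N n])
  finally show ?thesis .
qed

lemma U_0: "U 0 k \<omega> = u0 (real k / real N)" by (simp add: U_def)

lemma Zinc_meas_F:
  assumes "s \<le> r" "0 \<le> s" "k < N"
  shows "Zinc W N s r k \<in> borel_measurable (F r)"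
proof -
  have x: "0 \<le> real k / real N" "real k / real N \<le> 1" "0 \<le> real (Suc k) / real N" "real (Suc k) / real N \<le> 1"
    using assms N by auto
  have m: "W r x \<in> borel_measurable (F r)" "W s x \<in> borel_measurable (F r)" if "0 \<le> x" "x \<le> 1" for x
    using bs_meas[OF BS _ that] meas_F_mono[OF BS assms(1)] assms by auto
  show ?thesis unfolding Zinc_def WN_def using m[OF x(1,2)] m[OF x(3,4)] by measurable
qed

lemma U_meas: "k \<in> {1..N-1} \<Longrightarrow> U m k \<in> borel_measurable (F (ts m))"
proof (induction m arbitrary: k)
  case 0 then show ?case by (simp add: U_0)
next
  case (Suc m)
  have IH: "U m k' \<in> borel_measurable (F (ts (Suc m)))" if "k' \<in> {1..N-1}" for k'
    using meas_F_mono[OF BS ts_mono[of m "Suc m"] Suc.IH[OF that]] by simp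
  have Z: "Zinc W N (ts m) (ts (Suc m)) k' \<in> borel_measurable (F (ts (Suc m)))" if "k' \<in> {1..N-1}" for k'
    using that by (intro Zinc_meas_F ts_mono ts_nonneg) auto
  have xi: "xi m (ts (Suc m)) k' \<in> borel_measurable (F (ts (Suc m)))" if "k' \<in> {1..N-1}" for k'
  proof -
    have [measurable]: "fq g \<in> borel_measurable borel" by (rule fm)
    show ?thesis unfolding xi_def using IH[OF that] Z[OF that] by measurable
  qed
  have "U (Suc m) k = (\<lambda>\<omega>. \<Sum>k'=1..N-1. Kern N (tau * real N ^ 2) k k' * (xi m (ts (Suc m)) k' \<omega> * U m k' \<omega>))"
    using U_Suc[OF Suc.prems] by auto
  also have "\<dots> \<in> borel_measurable (F (ts (Suc m)))"
    using IH xi by (intro borel_measurable_sum borel_measurable_times borel_measurable_const) auto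
  finally show ?case .
qed

lemma U_meas_P: "k \<in> {1..N-1} \<Longrightarrow> U m k \<in> borel_measurable P"
  using meas_F_to_P[OF BS U_meas] .

lemma Xv_meas: "(\<lambda>\<omega>. Xv m \<omega> i) \<in> borel_measurable (F (ts m))"
  unfolding Xv_def using U_meas[of i m] by (cases "i \<in> {1..N-1}") auto

lemma fq_sq_le: "(fq g v)^2 \<le> Lf^2"
  using power_mono[OF fb[of v] abs_ge_zero, of 2] by simp

lemma abs_prod_le: "\<bar>a * b\<bar> \<le> a^2 + (b::real)^2"
proof -
  have "0 \<le> (\<bar>a\<bar> - \<bar>b\<bar>)^2" by simp
  moreover have "(\<bar>a\<bar> - \<bar>b\<bar>)^2 = a^2 + b^2 - 2 * \<bar>a * b\<bar>"
    by (simp add: power2_eq_square algebra_simps abs_mult)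
  ultimately show ?thesis by (smt (verit) abs_ge_zero)
qed

lemma U_sq_bound_int:
  assumes Ik: "integrable P (\<lambda>\<omega>. (U m k \<omega>)^2)" and Ij: "integrable P (\<lambda>\<omega>. (U m j \<omega>)^2)"
    and km: "U m k \<in> borel_measurable P" and jm: "U m j \<in> borel_measurable P"
    and Gm: "G \<in> borel_measurable P" and c: "0 \<le> c" and G: "\<And>\<omega>. \<bar>G \<omega>\<bar> \<le> \<bar>U m k \<omega> * U m j \<omega>\<bar> * c"
  shows "integrable P G"
proof (rule Bochner_Integration.integrable_bound[OF _ Gm])
  show "integrable P (\<lambda>\<omega>. c * ((U m k \<omega>)^2 + (U m j \<omega>)^2))"
    using Ik Ij by auto
  show "AE \<omega> in P. norm (G \<omega>) \<le> norm (c * ((U m k \<omega>)^2 + (U m j \<omega>)^2))"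
  proof (rule AE_I2)
    fix \<omega>
    have "\<bar>U m k \<omega> * U m j \<omega>\<bar> \<le> (U m k \<omega>)^2 + (U m j \<omega>)^2"
      by (rule abs_prod_le)
    then have "\<bar>U m k \<omega> * U m j \<omega>\<bar> * c \<le> ((U m k \<omega>)^2 + (U m j \<omega>)^2) * c"
      using c by (rule mult_right_mono)
    then show "norm (G \<omega>) \<le> norm (c * ((U m k \<omega>)^2 + (U m j \<omega>)^2))"
      using G[of \<omega>] c by (simp add: mult.commute)
  qed
qed

lemma exp_swap: "A + B = C + D \<Longrightarrow> exp A * exp B = exp C * exp (D::real)"
  by (simp add: exp_add[symmetric])

lemma Xv_rng: "k \<in> {1..N-1} \<Longrightarrow> Xv m \<omega> k = U m k \<omega>"
  by (simp add: Xv_def)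

lemma PW:
  assumes r: "ts m \<le> r" and k: "k \<in> {1..N-1}" and j: "j \<in> {1..N-1}"
    and Ik: "integrable P (\<lambda>\<omega>. (U m k \<omega>)^2)" and Ij: "integrable P (\<lambda>\<omega>. (U m j \<omega>)^2)"
  shows "integrable P (\<lambda>\<omega>. (U m k \<omega> * xi m r k \<omega>) * (U m j \<omega> * xi m r j \<omega>))"
    and "prob_space.expectation P (\<lambda>\<omega>. (U m k \<omega> * xi m r k \<omega>) * (U m j \<omega> * xi m r j \<omega>))
       = prob_space.expectation P (\<lambda>\<omega>. U m k \<omega> * U m j \<omega> *
            (if k = j then exp (real N * (fq g (U m k \<omega>))^2 * (r - ts m)) else 1))"
proof -
  interpret prob_space P by (rule P)
  define d where "d = r - ts m"
  have d: "0 \<le> d" using r by (simp add: d_def)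
  have [measurable]: "fq g \<in> borel_measurable borel" by (rule fm)
  define h where "h = (\<lambda>x::nat\<Rightarrow>real. x k * x j * exp (- real N * (fq g (x k))^2 * d / 2 - real N * (fq g (x j))^2 * d / 2))"
  define a where "a = (\<lambda>x::nat\<Rightarrow>real. sqrt (real N) * fq g (x k))"
  define b where "b = (\<lambda>x::nat\<Rightarrow>real. sqrt (real N) * fq g (x j))"
  have hm: "h \<in> borel_measurable PX" unfolding h_def by measurable
  have am: "a \<in> borel_measurable PX" unfolding a_def by measurable
  have bm: "b \<in> borel_measurable PX" unfolding b_def by measurable
  have kN: "k < N" "j < N" using k j by auto
  have sN: "sqrt (real N) ^ 2 = real N" by simp
  have eq1: "(U m k \<omega> * xi m r k \<omega>) * (U m j \<omega> * xi m r j \<omega>)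
      = h (Xv m \<omega>) * exp (a (Xv m \<omega>) * Zinc W N (ts m) r k \<omega> + b (Xv m \<omega>) * Zinc W N (ts m) r j \<omega>)" for \<omega>
  proof -
    have "xi m r k \<omega> * xi m r j \<omega> = exp (- real N * (fq g (U m k \<omega>))^2 * d / 2 - real N * (fq g (U m j \<omega>))^2 * d / 2)
        * exp (sqrt (real N) * fq g (U m k \<omega>) * Zinc W N (ts m) r k \<omega> + sqrt (real N) * fq g (U m j \<omega>) * Zinc W N (ts m) r j \<omega>)"
      unfolding xi_def d_def by (rule exp_swap) (simp add: field_simps)
    then show ?thesis unfolding h_def a_def b_def using k j by (simp add: Xv_rng mult_ac)
  qed
  have eq2: "h (Xv m \<omega>) * exp (qv k j (a (Xv m \<omega>)) (b (Xv m \<omega>)) d / 2)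
      = U m k \<omega> * U m j \<omega> * (if k = j then exp (real N * (fq g (U m k \<omega>))^2 * d) else 1)" for \<omega>
  proof (cases "k = j")
    case True
    have "exp (- real N * (fq g (U m k \<omega>))^2 * d / 2 - real N * (fq g (U m k \<omega>))^2 * d / 2)
        * exp (qv k k (sqrt (real N) * fq g (U m k \<omega>)) (sqrt (real N) * fq g (U m k \<omega>)) d / 2)
        = exp (real N * (fq g (U m k \<omega>))^2 * d)"
      unfolding exp_add[symmetric] qv_def by (simp add: power_mult_distrib sN algebra_simps power2_eq_square)
    then show ?thesis using True k unfolding h_def a_def b_def by (simp add: Xv_rng mult_ac)
  next
    case False
    have "exp (- real N * (fq g (U m k \<omega>))^2 * d / 2 - real N * (fq g (U m j \<omega>))^2 * d / 2)
        * exp (qv k j (sqrt (real N) * fq g (U m k \<omega>)) (sqrt (real N) * fq g (U m j \<omega>)) d / 2) = 1"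
      unfolding exp_add[symmetric] qv_def using False by (simp add: power_mult_distrib sN algebra_simps)
    then show ?thesis using False k j unfolding h_def a_def b_def by (simp add: Xv_rng mult_ac)
  qed
  have int: "integrable P (\<lambda>\<omega>. \<bar>h (Xv m \<omega>)\<bar> * exp (qv k j (a (Xv m \<omega>)) (b (Xv m \<omega>)) d / 2))"
  proof (rule U_sq_bound_int[OF Ik Ij U_meas_P[OF k] U_meas_P[OF j]])
    have XP: "Xv m \<in> measurable P PX" by (rule meas_F_to_P[OF BS X_meas_PiM[OF Xv_meas]])
    show "(\<lambda>\<omega>. \<bar>h (Xv m \<omega>)\<bar> * exp (qv k j (a (Xv m \<omega>)) (b (Xv m \<omega>)) d / 2)) \<in> borel_measurable P"
      using hm am bm XP unfolding qv_def by measurable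
    show "0 \<le> exp (real N * Lf^2 * d)" by simp
    fix \<omega>
    have "\<bar>h (Xv m \<omega>)\<bar> * exp (qv k j (a (Xv m \<omega>)) (b (Xv m \<omega>)) d / 2)
        = \<bar>h (Xv m \<omega>) * exp (qv k j (a (Xv m \<omega>)) (b (Xv m \<omega>)) d / 2)\<bar>" by (simp add: abs_mult)
    also have "\<dots> = \<bar>U m k \<omega> * U m j \<omega>\<bar> * (if k = j then exp (real N * (fq g (U m k \<omega>))^2 * d) else 1)"
      unfolding eq2 by (simp add: abs_mult)
    also have "\<dots> \<le> \<bar>U m k \<omega> * U m j \<omega>\<bar> * exp (real N * Lf^2 * d)"
    proof (rule mult_left_mono)
      have "real N * (fq g (U m k \<omega>))^2 * d \<le> real N * Lf^2 * d"
        using fq_sq_le d by (simp add: mult_left_mono mult_right_mono)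
      moreover have "0 \<le> real N * Lf^2 * d" using d by simp
      ultimately show "(if k = j then exp (real N * (fq g (U m k \<omega>))^2 * d) else 1) \<le> exp (real N * Lf^2 * d)"
        by auto
    qed simp
    finally show "\<bar>\<bar>h (Xv m \<omega>)\<bar> * exp (qv k j (a (Xv m \<omega>)) (b (Xv m \<omega>)) d / 2)\<bar> \<le> \<bar>U m k \<omega> * U m j \<omega>\<bar> * exp (real N * Lf^2 * d)"
      by simp
  qed
  note F = freeze[OF P BS ts_nonneg r N kN Xv_meas hm am bm int[unfolded d_def]]
  show "integrable P (\<lambda>\<omega>. (U m k \<omega> * xi m r k \<omega>) * (U m j \<omega> * xi m r j \<omega>))"
    unfolding eq1 using F(1) .
  show "expectation (\<lambda>\<omega>. (U m k \<omega> * xi m r k \<omega>) * (U m j \<omega> * xi m r j \<omega>))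
       = expectation (\<lambda>\<omega>. U m k \<omega> * U m j \<omega> * (if k = j then exp (real N * (fq g (U m k \<omega>))^2 * (r - ts m)) else 1))"
    unfolding eq1 F(2) eq2[unfolded d_def] ..
qed

lemma int_UU:
  assumes k: "k \<in> {1..N-1}" and j: "j \<in> {1..N-1}"
    and Ik: "integrable P (\<lambda>\<omega>. (U m k \<omega>)^2)" and Ij: "integrable P (\<lambda>\<omega>. (U m j \<omega>)^2)"
  shows "integrable P (\<lambda>\<omega>. U m k \<omega> * U m j \<omega>)"
  by (rule U_sq_bound_int[OF Ik Ij U_meas_P[OF k] U_meas_P[OF j], where c=1])
     (use U_meas_P[OF k] U_meas_P[OF j] in auto)

definition "Rm m r k \<omega> = (exp (real N * (fq g (U m k \<omega>))^2 * (r - ts m)) - 1) * (U m k \<omega>)^2"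

lemma int_R:
  assumes r: "ts m \<le> r" and k: "k \<in> {1..N-1}" and Ik: "integrable P (\<lambda>\<omega>. (U m k \<omega>)^2)"
  shows "integrable P (Rm m r k)"
proof (rule U_sq_bound_int[OF Ik Ik U_meas_P[OF k] U_meas_P[OF k], where c="exp (real N * Lf^2 * (r - ts m))"])
  have [measurable]: "fq g \<in> borel_measurable borel" by (rule fm)
  show "Rm m r k \<in> borel_measurable P" unfolding Rm_def using U_meas_P[OF k] by measurable
  show "0 \<le> exp (real N * Lf^2 * (r - ts m))" by simp
  fix \<omega>
  have e: "real N * (fq g (U m k \<omega>))^2 * (r - ts m) \<le> real N * Lf^2 * (r - ts m)"
    using fq_sq_le r by (simp add: mult_left_mono mult_right_mono)
  have e0: "0 \<le> real N * (fq g (U m k \<omega>))^2 * (r - ts m)" using r by simp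
  have "\<bar>exp (real N * (fq g (U m k \<omega>))^2 * (r - ts m)) - 1\<bar> \<le> exp (real N * Lf^2 * (r - ts m))"
  proof -
    have "1 \<le> exp (real N * (fq g (U m k \<omega>))^2 * (r - ts m))" using e0 by simp
    moreover have "exp (real N * (fq g (U m k \<omega>))^2 * (r - ts m)) \<le> exp (real N * Lf^2 * (r - ts m))" using e by simp
    ultimately show ?thesis by linarith
  qed
  then have "\<bar>exp (real N * (fq g (U m k \<omega>))^2 * (r - ts m)) - 1\<bar> * (U m k \<omega>)^2 \<le> exp (real N * Lf^2 * (r - ts m)) * (U m k \<omega>)^2"
    by (rule mult_right_mono) simp
  then show "\<bar>Rm m r k \<omega>\<bar> \<le> \<bar>U m k \<omega> * U m k \<omega>\<bar> * exp (real N * Lf^2 * (r - ts m))"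
    unfolding Rm_def by (simp add: abs_mult power2_eq_square mult_ac)
qed

lemma Qid:
  assumes r: "ts m \<le> r" and I: "\<And>k. k \<in> {1..N-1} \<Longrightarrow> integrable P (\<lambda>\<omega>. (U m k \<omega>)^2)"
  shows "integrable P (\<lambda>\<omega>. (\<Sum>k=1..N-1. c k * (xi m r k \<omega> * U m k \<omega>))^2)"
    and "prob_space.expectation P (\<lambda>\<omega>. (\<Sum>k=1..N-1. c k * (xi m r k \<omega> * U m k \<omega>))^2)
       = prob_space.expectation P (\<lambda>\<omega>. (\<Sum>k=1..N-1. c k * U m k \<omega>)^2)
         + (\<Sum>k=1..N-1. (c k)^2 * prob_space.expectation P (Rm m r k))"
proof -
  interpret prob_space P by (rule P)
  define A where "A = (\<lambda>k \<omega>. c k * (xi m r k \<omega> * U m k \<omega>))"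
  have sq: "(\<Sum>k=1..N-1. f k)^2 = (\<Sum>k=1..N-1. \<Sum>j=1..N-1. f k * f j)" for f :: "nat \<Rightarrow> real"
    by (simp add: power2_eq_square sum_product)
  have AA: "A k \<omega> * A j \<omega> = c k * c j * ((U m k \<omega> * xi m r k \<omega>) * (U m j \<omega> * xi m r j \<omega>))" for k j \<omega>
    by (simp add: A_def mult_ac)
  have intAA: "integrable P (\<lambda>\<omega>. A k \<omega> * A j \<omega>)" if "k \<in> {1..N-1}" "j \<in> {1..N-1}" for k j
    unfolding AA using PW(1)[OF r that I[OF that(1)] I[OF that(2)]] by simp
  have EAA: "expectation (\<lambda>\<omega>. A k \<omega> * A j \<omega>) = c k * c j * (expectation (\<lambda>\<omega>. U m k \<omega> * U m j \<omega>)
      + (if k = j then expectation (Rm m r k) else 0))"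
    if kj: "k \<in> {1..N-1}" "j \<in> {1..N-1}" for k j
  proof -
    have "expectation (\<lambda>\<omega>. A k \<omega> * A j \<omega>) = c k * c j * expectation (\<lambda>\<omega>. (U m k \<omega> * xi m r k \<omega>) * (U m j \<omega> * xi m r j \<omega>))"
      unfolding AA by simp
    also have "expectation (\<lambda>\<omega>. (U m k \<omega> * xi m r k \<omega>) * (U m j \<omega> * xi m r j \<omega>))
       = expectation (\<lambda>\<omega>. U m k \<omega> * U m j \<omega> * (if k = j then exp (real N * (fq g (U m k \<omega>))^2 * (r - ts m)) else 1))"
      by (rule PW(2)[OF r kj I[OF kj(1)] I[OF kj(2)]])
    also have "\<dots> = expectation (\<lambda>\<omega>. U m k \<omega> * U m j \<omega>) + (if k = j then expectation (Rm m r k) else 0)"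
    proof (cases "k = j")
      case True
      have "(\<lambda>\<omega>. U m k \<omega> * U m j \<omega> * (if k = j then exp (real N * (fq g (U m k \<omega>))^2 * (r - ts m)) else 1))
          = (\<lambda>\<omega>. U m k \<omega> * U m j \<omega> + Rm m r k \<omega>)"
        using True by (simp add: Rm_def power2_eq_square algebra_simps)
      then show ?thesis using True int_UU[OF kj I[OF kj(1)] I[OF kj(2)]] int_R[OF r kj(1) I[OF kj(1)]] by simp
    qed simp
    finally show ?thesis .
  qed
  have intUU: "integrable P (\<lambda>\<omega>. c k * c j * (U m k \<omega> * U m j \<omega>))" if "k \<in> {1..N-1}" "j \<in> {1..N-1}" for k j
    using int_UU[OF that I[OF that(1)] I[OF that(2)]] by simp
  have "(\<lambda>\<omega>. (\<Sum>k=1..N-1. c k * (xi m r k \<omega> * U m k \<omega>))^2) = (\<lambda>\<omega>. \<Sum>k=1..N-1. \<Sum>j=1..N-1. A k \<omega> * A j \<omega>)"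
    unfolding sq A_def ..
  moreover have "integrable P (\<lambda>\<omega>. \<Sum>k=1..N-1. \<Sum>j=1..N-1. A k \<omega> * A j \<omega>)"
    by (intro Bochner_Integration.integrable_sum intAA) auto
  ultimately show "integrable P (\<lambda>\<omega>. (\<Sum>k=1..N-1. c k * (xi m r k \<omega> * U m k \<omega>))^2)" by simp
  have "expectation (\<lambda>\<omega>. (\<Sum>k=1..N-1. c k * (xi m r k \<omega> * U m k \<omega>))^2)
      = expectation (\<lambda>\<omega>. \<Sum>k=1..N-1. \<Sum>j=1..N-1. A k \<omega> * A j \<omega>)"
    unfolding sq A_def ..
  also have "\<dots> = (\<Sum>k=1..N-1. expectation (\<lambda>\<omega>. \<Sum>j=1..N-1. A k \<omega> * A j \<omega>))"
    by (rule Bochner_Integration.integral_sum) (auto intro!: Bochner_Integration.integrable_sum intAA)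
  also have "\<dots> = (\<Sum>k=1..N-1. \<Sum>j=1..N-1. expectation (\<lambda>\<omega>. A k \<omega> * A j \<omega>))"
    by (intro sum.cong refl Bochner_Integration.integral_sum) (auto intro!: intAA)
  also have "\<dots> = (\<Sum>k=1..N-1. \<Sum>j=1..N-1. c k * c j * (expectation (\<lambda>\<omega>. U m k \<omega> * U m j \<omega>)
      + (if k = j then expectation (Rm m r k) else 0)))"
    by (intro sum.cong refl EAA) auto
  also have "\<dots> = (\<Sum>k=1..N-1. \<Sum>j=1..N-1. c k * c j * expectation (\<lambda>\<omega>. U m k \<omega> * U m j \<omega>))
      + (\<Sum>k=1..N-1. (c k)^2 * expectation (Rm m r k))"
  proof -
    have "(\<Sum>j=1..N-1. c k * c j * (expectation (\<lambda>\<omega>. U m k \<omega> * U m j \<omega>) + (if k = j then expectation (Rm m r k) else 0)))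
        = (\<Sum>j=1..N-1. c k * c j * expectation (\<lambda>\<omega>. U m k \<omega> * U m j \<omega>)) + (c k)^2 * expectation (Rm m r k)"
      if k: "k \<in> {1..N-1}" for k
    proof -
      have "(\<Sum>j=1..N-1. c k * c j * (if k = j then expectation (Rm m r k) else 0))
          = (\<Sum>j=1..N-1. if j = k then (c k)^2 * expectation (Rm m r k) else 0)"
        by (intro sum.cong refl) (auto simp: power2_eq_square)
      also have "\<dots> = (c k)^2 * expectation (Rm m r k)" using k by (simp add: sum.delta')
      finally show ?thesis by (simp add: distrib_left sum.distrib)
    qed
    then show ?thesis by (simp add: sum.distrib)
  qed
  also have "(\<Sum>k=1..N-1. \<Sum>j=1..N-1. c k * c j * expectation (\<lambda>\<omega>. U m k \<omega> * U m j \<omega>))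
      = expectation (\<lambda>\<omega>. (\<Sum>k=1..N-1. c k * U m k \<omega>)^2)"
  proof -
    have "expectation (\<lambda>\<omega>. (\<Sum>k=1..N-1. c k * U m k \<omega>)^2)
        = expectation (\<lambda>\<omega>. \<Sum>k=1..N-1. \<Sum>j=1..N-1. c k * c j * (U m k \<omega> * U m j \<omega>))"
      unfolding sq by (simp add: mult_ac)
    also have "\<dots> = (\<Sum>k=1..N-1. expectation (\<lambda>\<omega>. \<Sum>j=1..N-1. c k * c j * (U m k \<omega> * U m j \<omega>)))"
      by (intro Bochner_Integration.integral_sum Bochner_Integration.integrable_sum intUU) auto
    also have "\<dots> = (\<Sum>k=1..N-1. \<Sum>j=1..N-1. expectation (\<lambda>\<omega>. c k * c j * (U m k \<omega> * U m j \<omega>)))"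
      by (intro sum.cong refl Bochner_Integration.integral_sum intUU) auto
    also have "\<dots> = (\<Sum>k=1..N-1. \<Sum>j=1..N-1. c k * c j * expectation (\<lambda>\<omega>. U m k \<omega> * U m j \<omega>))"
      by simp
    finally show ?thesis ..
  qed
  finally show "expectation (\<lambda>\<omega>. (\<Sum>k=1..N-1. c k * (xi m r k \<omega> * U m k \<omega>))^2)
       = expectation (\<lambda>\<omega>. (\<Sum>k=1..N-1. c k * U m k \<omega>)^2) + (\<Sum>k=1..N-1. (c k)^2 * expectation (Rm m r k))" .
qed

lemma U_int: "k \<in> {1..N-1} \<Longrightarrow> integrable P (\<lambda>\<omega>. (U m k \<omega>)^2)"
proof (induction m arbitrary: k)
  case 0
  interpret prob_space P by (rule P)
  show ?case by (simp add: U_0)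
next
  case (Suc m)
  have "(\<lambda>\<omega>. (U (Suc m) k \<omega>)^2) = (\<lambda>\<omega>. (\<Sum>k'=1..N-1. Kern N (tau * real N ^ 2) k k' * (xi m (ts (Suc m)) k' \<omega> * U m k' \<omega>))^2)"
    using U_Suc[OF Suc.prems] by simp
  then show ?case using Qid(1)[OF ts_mono[of m "Suc m"] Suc.IH] by simp
qed

definition "s0 = tau * real N ^ 2"

lemma V:
  assumes n: "n \<in> {1..N-1}"
  shows "prob_space.expectation P (\<lambda>\<omega>. (\<Sum>k=1..N-1. Kern N (real p * s0) n k * U m k \<omega>)^2)
     = (\<Sum>k=1..N-1. Kern N (real (m + p) * s0) n k * u0 (real k / real N))^2
       + (\<Sum>l<m. \<Sum>k=1..N-1. (Kern N (real (p + m - l) * s0) n k)^2 * prob_space.expectation P (Rm l (ts (Suc l)) k))"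
proof (induction m arbitrary: p)
  case 0
  interpret prob_space P by (rule P)
  show ?case by (simp add: U_0 prob_space)
next
  case (Suc m)
  interpret prob_space P by (rule P)
  define c where "c = (\<lambda>a. Kern N (real (Suc p) * s0) n a)"
  have eq: "(\<Sum>k=1..N-1. Kern N (real p * s0) n k * U (Suc m) k \<omega>) = (\<Sum>a=1..N-1. c a * (xi m (ts (Suc m)) a \<omega> * U m a \<omega>))" for \<omega>
  proof -
    have "(\<Sum>k=1..N-1. Kern N (real p * s0) n k * U (Suc m) k \<omega>)
        = (\<Sum>k=1..N-1. Kern N (real p * s0) n k * (\<Sum>a=1..N-1. Kern N s0 k a * (xi m (ts (Suc m)) a \<omega> * U m a \<omega>)))"
      by (intro sum.cong refl) (simp add: U_Suc s0_def)
    also have "\<dots> = (\<Sum>a=1..N-1. (\<Sum>k=1..N-1. Kern N (real p * s0) n k * Kern N s0 k a) * (xi m (ts (Suc m)) a \<omega> * U m a \<omega>))"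
      by (simp add: sum_distrib_left sum_distrib_right mult.assoc) (rule sum.swap)
    also have "\<dots> = (\<Sum>a=1..N-1. c a * (xi m (ts (Suc m)) a \<omega> * U m a \<omega>))"
      unfolding Kern_semigroup c_def by (simp add: algebra_simps)
    finally show ?thesis .
  qed
  have "expectation (\<lambda>\<omega>. (\<Sum>k=1..N-1. Kern N (real p * s0) n k * U (Suc m) k \<omega>)^2)
      = expectation (\<lambda>\<omega>. (\<Sum>a=1..N-1. c a * (xi m (ts (Suc m)) a \<omega> * U m a \<omega>))^2)"
    unfolding eq ..
  also have "\<dots> = expectation (\<lambda>\<omega>. (\<Sum>a=1..N-1. c a * U m a \<omega>)^2) + (\<Sum>a=1..N-1. (c a)^2 * expectation (Rm m (ts (Suc m)) a))"
    by (rule Qid(2)[OF ts_mono[of m "Suc m"] U_int]) auto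
  also have "expectation (\<lambda>\<omega>. (\<Sum>a=1..N-1. c a * U m a \<omega>)^2)
      = (\<Sum>k=1..N-1. Kern N (real (m + Suc p) * s0) n k * u0 (real k / real N))^2
       + (\<Sum>l<m. \<Sum>k=1..N-1. (Kern N (real (Suc p + m - l) * s0) n k)^2 * expectation (Rm l (ts (Suc l)) k))"
    unfolding c_def by (rule Suc.IH)
  finally show ?case
    by (simp add: c_def add.assoc)
qed

lemma exp_minus_one_le: "0 \<le> x \<Longrightarrow> exp x - 1 \<le> x * exp (x::real)"
proof -
  assume x: "0 \<le> x"
  have "1 - x \<le> exp (- x)" using exp_ge_add_one_self[of "-x"] by simp
  then have "(1 - x) * exp x \<le> exp (- x) * exp x" by (rule mult_right_mono) simp
  then show ?thesis by (simp add: exp_minus field_simps)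
qed

lemma ER_bound_gen:
  assumes gam: "real N * tau \<le> gam" and k: "k \<in> {1..N-1}" and r: "ts l \<le> r" "r \<le> ts l + tau"
  shows "prob_space.expectation P (Rm l r k)
     \<le> Lf^2 * exp (Lf^2 * gam) * tau * real N * prob_space.expectation P (\<lambda>\<omega>. (U l k \<omega>)^2)"
proof -
  interpret prob_space P by (rule P)
  define x where "x = real N * Lf^2 * tau"
  have x0: "0 \<le> x" using tau_pos by (simp add: x_def)
  have "expectation (Rm l r k) \<le> expectation (\<lambda>\<omega>. (exp x - 1) * (U l k \<omega>)^2)"
  proof (rule integral_mono)
    show "integrable P (Rm l r k)" by (rule int_R[OF r(1) k U_int[OF k]])
    show "integrable P (\<lambda>\<omega>. (exp x - 1) * (U l k \<omega>)^2)" using U_int[OF k] by simp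
    fix \<omega>
    have "real N * (fq g (U l k \<omega>))^2 * (r - ts l) \<le> real N * Lf^2 * (r - ts l)"
      using fq_sq_le r by (simp add: mult_left_mono mult_right_mono)
    also have "\<dots> \<le> x"
      unfolding x_def using r by (simp add: mult_left_mono)
    finally have "exp (real N * (fq g (U l k \<omega>))^2 * (r - ts l)) - 1 \<le> exp x - 1" by simp
    then show "Rm l r k \<omega> \<le> (exp x - 1) * (U l k \<omega>)^2"
      unfolding Rm_def by (simp add: mult_right_mono)
  qed
  also have "\<dots> = (exp x - 1) * expectation (\<lambda>\<omega>. (U l k \<omega>)^2)" by simp
  also have "\<dots> \<le> (x * exp (Lf^2 * gam)) * expectation (\<lambda>\<omega>. (U l k \<omega>)^2)"
  proof (rule mult_right_mono)
    have "x \<le> Lf^2 * gam" unfolding x_def using gam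
      by (metis mult.assoc mult.commute mult_left_mono zero_le_power2)
    then have "x * exp x \<le> x * exp (Lf^2 * gam)" using x0 by (simp add: mult_left_mono)
    then show "exp x - 1 \<le> x * exp (Lf^2 * gam)" using exp_minus_one_le[OF x0] by linarith
    show "0 \<le> expectation (\<lambda>\<omega>. (U l k \<omega>)^2)" by simp
  qed
  finally show ?thesis by (simp add: x_def mult_ac)
qed

lemma ER_bound:
  assumes gam: "real N * tau \<le> gam" and k: "k \<in> {1..N-1}"
  shows "prob_space.expectation P (Rm l (ts (Suc l)) k)
     \<le> Lf^2 * exp (Lf^2 * gam) * tau * real N * prob_space.expectation P (\<lambda>\<omega>. (U l k \<omega>)^2)"
  by (rule ER_bound_gen[OF gam k]) (use tau_pos in \<open>simp_all add: ts_Suc ts_mono\<close>)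

lemma Q_bound:
  assumes gam: "real N * tau \<le> gam" and B0: "\<And>k. k \<in> {1..N-1} \<Longrightarrow> \<bar>u0 (real k / real N)\<bar> \<le> B0"
    and B00: "0 \<le> B0" and n: "n \<in> {1..N-1}"
  shows "prob_space.expectation P (\<lambda>\<omega>. (U m n \<omega>)^2)
     \<le> 2 * B0^2 * exp (lamg (Lf^2 * exp (Lf^2 * gam)) * real m * tau)"
proof -
  interpret prob_space P by (rule P)
  define ka where "ka = Lf^2 * exp (Lf^2 * gam)"
  define Q where "Q = (\<lambda>m n. expectation (\<lambda>\<omega>. (U m n \<omega>)^2))"
  have ka0: "0 \<le> ka" by (simp add: ka_def)
  have H: "Q m n \<le> B0^2 + (\<Sum>l<m. ka * tau * real N *
              (\<Sum>k=1..N-1. (Kern N (real (m - l) * (tau * real N ^ 2)) n k)^2 * Q l k))"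
    if n: "n \<in> {1..N-1}" for m n
  proof -
    have e0: "(\<Sum>k=1..N-1. Kern N (real 0 * s0) n k * U m k \<omega>) = U m n \<omega>" for \<omega>
      using Kern_0_apply[OF n] by simp
    have "Q m n = (\<Sum>k=1..N-1. Kern N (real (m + 0) * s0) n k * u0 (real k / real N))^2
       + (\<Sum>l<m. \<Sum>k=1..N-1. (Kern N (real (0 + m - l) * s0) n k)^2 * expectation (Rm l (ts (Suc l)) k))"
      unfolding Q_def using V[OF n, of 0 m] unfolding e0 .
    also have "(\<Sum>k=1..N-1. Kern N (real (m + 0) * s0) n k * u0 (real k / real N))^2 \<le> B0^2"
    proof -
      have "\<bar>\<Sum>k=1..N-1. Kern N (real (m + 0) * s0) n k * u0 (real k / real N)\<bar> \<le> B0"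
        by (rule Kern_sup[OF _ N _ n]) (use B0 tau_pos in \<open>auto simp: s0_def\<close>)
      then have "\<bar>\<Sum>k=1..N-1. Kern N (real (m + 0) * s0) n k * u0 (real k / real N)\<bar>^2 \<le> B0^2"
        by (rule power_mono) simp
      then show ?thesis by simp
    qed
    also have "(\<Sum>l<m. \<Sum>k=1..N-1. (Kern N (real (0 + m - l) * s0) n k)^2 * expectation (Rm l (ts (Suc l)) k))
        \<le> (\<Sum>l<m. ka * tau * real N * (\<Sum>k=1..N-1. (Kern N (real (m - l) * (tau * real N ^ 2)) n k)^2 * Q l k))"
    proof (rule sum_mono)
      fix l assume "l \<in> {..<m}"
      have "(\<Sum>k=1..N-1. (Kern N (real (0 + m - l) * s0) n k)^2 * expectation (Rm l (ts (Suc l)) k))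
          \<le> (\<Sum>k=1..N-1. (Kern N (real (m - l) * (tau * real N ^ 2)) n k)^2 * (ka * tau * real N * Q l k))"
      proof (rule sum_mono)
        fix k assume k: "k \<in> {1..N-1}"
        show "(Kern N (real (0 + m - l) * s0) n k)^2 * expectation (Rm l (ts (Suc l)) k)
            \<le> (Kern N (real (m - l) * (tau * real N ^ 2)) n k)^2 * (ka * tau * real N * Q l k)"
          using mult_left_mono[OF ER_bound[OF gam k, of l], of "(Kern N (real (m - l) * s0) n k)^2"]
          unfolding s0_def Q_def ka_def by (simp add: mult_ac)
      qed
      also have "\<dots> = ka * tau * real N * (\<Sum>k=1..N-1. (Kern N (real (m - l) * (tau * real N ^ 2)) n k)^2 * Q l k)"
        by (simp add: sum_distrib_left mult_ac)
      finally show "(\<Sum>k=1..N-1. (Kern N (real (0 + m - l) * s0) n k)^2 * expectation (Rm l (ts (Suc l)) k))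
          \<le> ka * tau * real N * (\<Sum>k=1..N-1. (Kern N (real (m - l) * (tau * real N ^ 2)) n k)^2 * Q l k)" .
    qed
    finally show ?thesis by simp
  qed
  have "Q m n \<le> 2 * B0^2 * exp (lamg ka * real m * tau)"
    by (rule gronwall_main[OF N tau_pos ka0 _ H n]) simp_all
  then show ?thesis by (simp add: Q_def ka_def)
qed

lemma PW1:
  assumes r: "ts m \<le> r" and k: "k \<in> {1..N-1}"
  shows "integrable P (\<lambda>\<omega>. (U m k \<omega>)^2 * xi m r k \<omega>)"
    and "prob_space.expectation P (\<lambda>\<omega>. (U m k \<omega>)^2 * xi m r k \<omega>) = prob_space.expectation P (\<lambda>\<omega>. (U m k \<omega>)^2)"
proof -
  interpret prob_space P by (rule P)
  define d where "d = r - ts m"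
  have [measurable]: "fq g \<in> borel_measurable borel" by (rule fm)
  define h where "h = (\<lambda>x::nat\<Rightarrow>real. (x k)^2 * exp (- real N * (fq g (x k))^2 * d / 2))"
  define a where "a = (\<lambda>x::nat\<Rightarrow>real. sqrt (real N) * fq g (x k))"
  define b where "b = (\<lambda>x::nat\<Rightarrow>real. 0::real)"
  have hm: "h \<in> borel_measurable PX" unfolding h_def by measurable
  have am: "a \<in> borel_measurable PX" unfolding a_def by measurable
  have bm: "b \<in> borel_measurable PX" unfolding b_def by measurable
  have kN: "k < N" using k by auto
  have sN: "sqrt (real N) ^ 2 = real N" by simp
  have eq1: "(U m k \<omega>)^2 * xi m r k \<omega>
      = h (Xv m \<omega>) * exp (a (Xv m \<omega>) * Zinc W N (ts m) r k \<omega> + b (Xv m \<omega>) * Zinc W N (ts m) r k \<omega>)" for \<omega>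
  proof -
    have "xi m r k \<omega> = exp (- real N * (fq g (U m k \<omega>))^2 * d / 2) * exp (sqrt (real N) * fq g (U m k \<omega>) * Zinc W N (ts m) r k \<omega>)"
      unfolding xi_def d_def exp_add[symmetric] by (simp add: field_simps)
    then show ?thesis unfolding h_def a_def b_def using k by (simp add: Xv_rng mult_ac)
  qed
  have eq2: "h (Xv m \<omega>) * exp (qv k k (a (Xv m \<omega>)) (b (Xv m \<omega>)) d / 2) = (U m k \<omega>)^2" for \<omega>
  proof -
    have "exp (- real N * (fq g (U m k \<omega>))^2 * d / 2) * exp (qv k k (sqrt (real N) * fq g (U m k \<omega>)) 0 d / 2) = 1"
      unfolding exp_add[symmetric] qv_def by (simp add: power_mult_distrib sN)
    then show ?thesis using k unfolding h_def a_def b_def by (simp add: Xv_rng mult_ac)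
  qed
  have int: "integrable P (\<lambda>\<omega>. \<bar>h (Xv m \<omega>)\<bar> * exp (qv k k (a (Xv m \<omega>)) (b (Xv m \<omega>)) d / 2))"
  proof -
    have "\<bar>h (Xv m \<omega>)\<bar> * exp (qv k k (a (Xv m \<omega>)) (b (Xv m \<omega>)) d / 2) = (U m k \<omega>)^2" for \<omega>
      using eq2[of \<omega>] by (simp add: h_def abs_mult)
    then show ?thesis using U_int[OF k] by simp
  qed
  note F = freeze[OF P BS ts_nonneg r N kN kN Xv_meas hm am bm int[unfolded d_def]]
  show "integrable P (\<lambda>\<omega>. (U m k \<omega>)^2 * xi m r k \<omega>)"
    unfolding eq1 using F(1) .
  show "expectation (\<lambda>\<omega>. (U m k \<omega>)^2 * xi m r k \<omega>) = expectation (\<lambda>\<omega>. (U m k \<omega>)^2)"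
    unfolding eq1 F(2) eq2[unfolded d_def] ..
qed

lemma final_loc:
  assumes gam: "real N * tau \<le> gam" and B0: "\<And>k. k \<in> {1..N-1} \<Longrightarrow> \<bar>u0 (real k / real N)\<bar> \<le> B0"
    and B00: "0 \<le> B0" and n: "n \<in> {1..N-1}" and t: "ts m \<le> t" "t \<le> ts (Suc m)"
  shows "integrable P (\<lambda>\<omega>. (xi m t n \<omega> * U m n \<omega> - U m n \<omega>)^2)"
    and "prob_space.expectation P (\<lambda>\<omega>. (xi m t n \<omega> * U m n \<omega> - U m n \<omega>)^2)
      \<le> Lf^2 * exp (Lf^2 * gam) * tau * real N * (2 * B0^2 * exp (lamg (Lf^2 * exp (Lf^2 * gam)) * real m * tau))"
proof -
  interpret prob_space P by (rule P)
  have I: "integrable P (\<lambda>\<omega>. (U m n \<omega>)^2)" by (rule U_int[OF n])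
  note A = PW[OF t(1) n n I I]
  note B = PW1[OF t(1) n]
  have eq: "(\<lambda>\<omega>. (xi m t n \<omega> * U m n \<omega> - U m n \<omega>)^2)
      = (\<lambda>\<omega>. (U m n \<omega> * xi m t n \<omega>) * (U m n \<omega> * xi m t n \<omega>) - 2 * ((U m n \<omega>)^2 * xi m t n \<omega>) + (U m n \<omega>)^2)"
    by (rule ext) (simp add: power2_eq_square algebra_simps)
  show "integrable P (\<lambda>\<omega>. (xi m t n \<omega> * U m n \<omega> - U m n \<omega>)^2)"
    unfolding eq using A(1) B(1) I by simp
  have "expectation (\<lambda>\<omega>. (xi m t n \<omega> * U m n \<omega> - U m n \<omega>)^2)
      = expectation (\<lambda>\<omega>. (U m n \<omega> * xi m t n \<omega>) * (U m n \<omega> * xi m t n \<omega>)) - 2 * expectation (\<lambda>\<omega>. (U m n \<omega>)^2 * xi m t n \<omega>)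
        + expectation (\<lambda>\<omega>. (U m n \<omega>)^2)"
    unfolding eq using A(1) B(1) I by simp
  also have "\<dots> = expectation (\<lambda>\<omega>. U m n \<omega> * U m n \<omega> * exp (real N * (fq g (U m n \<omega>))^2 * (t - ts m))) - expectation (\<lambda>\<omega>. (U m n \<omega>)^2)"
    unfolding A(2) B(2) by simp
  also have "\<dots> = expectation (Rm m t n)"
  proof -
    have "expectation (Rm m t n) = expectation (\<lambda>\<omega>. U m n \<omega> * U m n \<omega> * exp (real N * (fq g (U m n \<omega>))^2 * (t - ts m)) - (U m n \<omega>)^2)"
      unfolding Rm_def by (simp add: power2_eq_square algebra_simps)
    also have "\<dots> = expectation (\<lambda>\<omega>. U m n \<omega> * U m n \<omega> * exp (real N * (fq g (U m n \<omega>))^2 * (t - ts m))) - expectation (\<lambda>\<omega>. (U m n \<omega>)^2)"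
    proof (rule Bochner_Integration.integral_diff)
      have e: "(\<lambda>\<omega>. U m n \<omega> * U m n \<omega> * exp (real N * (fq g (U m n \<omega>))^2 * (t - ts m)))
          = (\<lambda>\<omega>. Rm m t n \<omega> + U m n \<omega> * U m n \<omega>)"
        by (rule ext) (simp add: Rm_def power2_eq_square algebra_simps)
      show "integrable P (\<lambda>\<omega>. U m n \<omega> * U m n \<omega> * exp (real N * (fq g (U m n \<omega>))^2 * (t - ts m)))"
        unfolding e by (intro Bochner_Integration.integrable_add int_R[OF t(1) n I] int_UU[OF n n I I])
    qed (rule I)
    finally show ?thesis ..
  qed
  also have "\<dots> \<le> Lf^2 * exp (Lf^2 * gam) * tau * real N * expectation (\<lambda>\<omega>. (U m n \<omega>)^2)"
    by (rule ER_bound_gen[OF gam n t(1)]) (use t(2) in \<open>simp add: ts_Suc\<close>)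
  also have "\<dots> \<le> Lf^2 * exp (Lf^2 * gam) * tau * real N * (2 * B0^2 * exp (lamg (Lf^2 * exp (Lf^2 * gam)) * real m * tau))"
  proof (rule mult_left_mono)
    show "expectation (\<lambda>\<omega>. (U m n \<omega>)^2) \<le> 2 * B0^2 * exp (lamg (Lf^2 * exp (Lf^2 * gam)) * real m * tau)"
      using Q_bound[OF gam B0 B00 n] by blast
    have "0 \<le> tau" using tau_pos by simp
    then show "0 \<le> Lf^2 * exp (Lf^2 * gam) * tau * real N"
      by (intro mult_nonneg_nonneg) auto
  qed
  finally show "expectation (\<lambda>\<omega>. (xi m t n \<omega> * U m n \<omega> - U m n \<omega>)^2)
      \<le> Lf^2 * exp (Lf^2 * gam) * tau * real N * (2 * B0^2 * exp (lamg (Lf^2 * exp (Lf^2 * gam)) * real m * tau))" .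
qed

end



lemma u0_cont: "C3_on_unit u \<Longrightarrow> continuous_on {0..1} u"
  unfolding C3_on_unit_def continuous_on_eq_continuous_within
  by (metis DERIV_continuous)

lemma sup_norm_bound:
  assumes c: "continuous_on {0..1} u" and x: "x \<in> {0..1}"
  shows "\<bar>u x\<bar> \<le> sup_norm01 u"
proof -
  have "compact ((\<lambda>x. \<bar>u x\<bar>) ` {0..1::real})"
    by (intro compact_continuous_image continuous_on_rabs c) simp
  then have "bdd_above ((\<lambda>x. \<bar>u x\<bar>) ` {0..1::real})"
    by (intro bounded_imp_bdd_above compact_imp_bounded)
  then show ?thesis unfolding sup_norm01_def using x by (intro cSup_upper) auto
qed

lemma fq_bound:
  assumes L: "L-lipschitz_on UNIV g" and g0: "g 0 = 0"
  shows "\<bar>fq g v\<bar> \<le> max L \<bar>deriv g 0\<bar>"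
proof (cases "v = 0")
  case True then show ?thesis by (simp add: fq_def)
next
  case False
  have "dist (g v) (g 0) \<le> L * dist v 0" by (rule lipschitz_onD[OF L]) auto
  then have "\<bar>g v\<bar> \<le> L * \<bar>v\<bar>" using g0 by (simp add: dist_real_def)
  then have "\<bar>g v / v\<bar> \<le> L" using False by (simp add: abs_divide divide_le_eq)
  then show ?thesis using False by (simp add: fq_def)
qed

lemma fq_meas:
  assumes L: "L-lipschitz_on UNIV g"
  shows "fq g \<in> borel_measurable borel"
proof -
  have [measurable]: "g \<in> borel_measurable borel"
    by (rule borel_measurable_continuous_onI[OF lipschitz_on_continuous_on[OF L]])
  have "fq g = (\<lambda>v. if v = 0 then deriv g 0 else g v / v)" by (rule ext) (simp add: fq_def)
  also have "\<dots> \<in> borel_measurable borel" by measurable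
  finally show ?thesis .
qed

theorem lemma5p1:
  fixes P :: "'a measure" and F :: "real \<Rightarrow> 'a measure"
    and W :: "real \<Rightarrow> real \<Rightarrow> 'a \<Rightarrow> real" and g u0 :: "real \<Rightarrow> real"
  assumes "prob_space P"
    and "brownian_sheet P F W"
    and "g C1_differentiable_on UNIV" and "\<exists>L. lipschitz_on L UNIV g" and "g 0 = 0"
    and "C3_on_unit u0" and "u0 0 = 0" and "u0 1 = 0"
  shows "\<forall>\<gamma>>0. \<forall>T>0. \<exists>C>0. \<forall>(M::nat) (N::nat) (m::nat) (t::real).
           0 < M \<longrightarrow> 0 < N \<longrightarrow> T / real M \<le> \<gamma> * (1 / real N) \<longrightarrow> m < M \<longrightarrow>
           real m * (T / real M) \<le> t \<longrightarrow> t < real (Suc m) * (T / real M) \<longrightarrow>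
           (\<forall>n. 1 \<le> n \<and> n \<le> N - 1 \<longrightarrow>
              integrable P (\<lambda>\<omega>. (LT_interp g u0 W T M N t n \<omega> - LT g u0 W T M N m n \<omega>)^2) \<and>
              sqrt (prob_space.expectation P
                      (\<lambda>\<omega>. (LT_interp g u0 W T M N t n \<omega> - LT g u0 W T M N m n \<omega>)^2))
                \<le> C * (1 + sup_norm01 u0) * sqrt ((T / real M) / (1 / real N)))"
proof (intro allI impI)
  fix gam T :: real
  assume gam: "gam > 0" and T: "T > 0"
  obtain L where L: "L-lipschitz_on UNIV g" using assms(4) by blast
  define Lf where "Lf = max L \<bar>deriv g 0\<bar>"
  have fb: "\<And>v. \<bar>fq g v\<bar> \<le> Lf" unfolding Lf_def by (rule fq_bound[OF L assms(5)])
  have fm: "fq g \<in> borel_measurable borel" by (rule fq_meas[OF L])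
  define B0 where "B0 = sup_norm01 u0"
  have uc: "continuous_on {0..1} u0" by (rule u0_cont[OF assms(6)])
  have B0: "\<And>x. x \<in> {0..1} \<Longrightarrow> \<bar>u0 x\<bar> \<le> B0" unfolding B0_def by (rule sup_norm_bound[OF uc])
  have B00: "0 \<le> B0" using B0[of 0] by simp
  define ka where "ka = Lf^2 * exp (Lf^2 * gam)"
  define lm where "lm = lamg ka"
  define C where "C = sqrt (2 * ka * exp (lm * T)) + 1"
  have ka0: "0 \<le> ka" unfolding ka_def by simp
  have "0 \<le> sqrt (2 * ka * exp (lm * T))" using ka0 by simp
  then have C: "C > 0" unfolding C_def by linarith
  show "\<exists>C>0. \<forall>(M::nat) (N::nat) (m::nat) (t::real).
           0 < M \<longrightarrow> 0 < N \<longrightarrow> T / real M \<le> gam * (1 / real N) \<longrightarrow> m < M \<longrightarrow>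
           real m * (T / real M) \<le> t \<longrightarrow> t < real (Suc m) * (T / real M) \<longrightarrow>
           (\<forall>n. 1 \<le> n \<and> n \<le> N - 1 \<longrightarrow>
              integrable P (\<lambda>\<omega>. (LT_interp g u0 W T M N t n \<omega> - LT g u0 W T M N m n \<omega>)^2) \<and>
              sqrt (prob_space.expectation P
                      (\<lambda>\<omega>. (LT_interp g u0 W T M N t n \<omega> - LT g u0 W T M N m n \<omega>)^2))
                \<le> C * (1 + sup_norm01 u0) * sqrt ((T / real M) / (1 / real N)))"
  proof (intro exI[of _ C] conjI C allI impI)
    fix M N m :: nat and t :: real and n :: nat
    assume M: "0 < M" and N: "0 < N" and tg: "T / real M \<le> gam * (1 / real N)" and mM: "m < M"
      and t1: "real m * (T / real M) \<le> t" and t2: "t < real (Suc m) * (T / real M)"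
      and n: "1 \<le> n \<and> n \<le> N - 1"
    interpret LTset P F W g u0 T M N Lf
      by (intro LTset.intro assms(1,2) T M N fm fb)
    have nr: "n \<in> {1..N-1}" using n by auto
    have gN: "real N * tau \<le> gam" using tg N unfolding tau_def by (simp add: field_simps)
    have B0k: "\<And>k. k \<in> {1..N-1} \<Longrightarrow> \<bar>u0 (real k / real N)\<bar> \<le> B0" using N by (intro B0) auto
    have tt: "ts m \<le> t" "t \<le> ts (Suc m)" using t1 t2 by (auto simp: ts_def tau_def)
    have fl: "nat \<lfloor>t / tau\<rfloor> = m"
    proof -
      have t1': "real m * tau \<le> t" "t < real (Suc m) * tau" using t1 t2 by (simp_all add: tau_def)
      have "real m \<le> t / tau" using t1' tau_pos by (simp add: le_divide_eq)
      moreover have "t / tau < real m + 1" using t1' tau_pos by (simp add: divide_less_eq algebra_simps)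
      ultimately have "\<lfloor>t / tau\<rfloor> = int m" by (intro floor_unique) auto
      then show ?thesis by simp
    qed
    have eqI: "LT_interp g u0 W T M N t n \<omega> = xi m t n \<omega> * U m n \<omega>" for \<omega>
    proof -
      have "LT_interp g u0 W T M N t n \<omega> = (let m' = nat \<lfloor>t / tau\<rfloor>; u = LT g u0 W T M N m' n \<omega> in
        exp (sqrt (real N) * fq g u * (WN W N t n \<omega> - WN W N (real m' * tau) n \<omega>)
           - real N * (fq g u)^2 * (t - real m' * tau) / 2) * u)"
        unfolding LT_interp_def tau_def Let_def ..
      also have "\<dots> = xi m t n \<omega> * U m n \<omega>"
        unfolding fl Let_def xi_def U_def Zinc_def ts_def ..
      finally show ?thesis .
    qed
    have eqF: "(\<lambda>\<omega>. (LT_interp g u0 W T M N t n \<omega> - LT g u0 W T M N m n \<omega>)^2)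
        = (\<lambda>\<omega>. (xi m t n \<omega> * U m n \<omega> - U m n \<omega>)^2)"
      by (rule ext) (simp add: eqI U_def)
    note R = final_loc[OF gN B0k B00 nr tt]
    show "integrable P (\<lambda>\<omega>. (LT_interp g u0 W T M N t n \<omega> - LT g u0 W T M N m n \<omega>)^2)"
      unfolding eqF by (rule R(1))
    have mT: "real m * tau \<le> T" using mM tau_pos unfolding tau_def using M
      by (simp add: field_simps)
    have "prob_space.expectation P (\<lambda>\<omega>. (xi m t n \<omega> * U m n \<omega> - U m n \<omega>)^2)
        \<le> ka * tau * real N * (2 * B0^2 * exp (lm * real m * tau))"
      using R(2) unfolding ka_def lm_def by simp
    also have "\<dots> \<le> ka * tau * real N * (2 * B0^2 * exp (lm * T))"
    proof -
      have lm0: "0 \<le> lm" unfolding lm_def ka_def using lamg_pos[of "Lf^2 * exp (Lf^2 * gam)"] by simp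
      have "lm * real m * tau \<le> lm * T" using mult_left_mono[OF mT lm0] by (simp add: mult.assoc)
      then have "exp (lm * real m * tau) \<le> exp (lm * T)" by simp
      moreover have "0 \<le> ka * tau * real N * (2 * B0^2)" using tau_pos unfolding ka_def
        by (intro mult_nonneg_nonneg) auto
      ultimately show ?thesis by (metis mult.assoc mult_left_mono)
    qed
    also have "\<dots> = (sqrt (2 * ka * exp (lm * T)) * B0 * sqrt (real N * tau))^2"
      using tau_pos B00 unfolding ka_def by (simp add: power_mult_distrib real_sqrt_mult algebra_simps)
    finally have E: "prob_space.expectation P (\<lambda>\<omega>. (xi m t n \<omega> * U m n \<omega> - U m n \<omega>)^2)
        \<le> (sqrt (2 * ka * exp (lm * T)) * B0 * sqrt (real N * tau))^2" .
    have "sqrt (prob_space.expectation P (\<lambda>\<omega>. (xi m t n \<omega> * U m n \<omega> - U m n \<omega>)^2))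
        \<le> sqrt (2 * ka * exp (lm * T)) * B0 * sqrt (real N * tau)"
    proof -
      have "0 \<le> sqrt (2 * ka * exp (lm * T)) * B0 * sqrt (real N * tau)"
        by (intro mult_nonneg_nonneg) (use B00 ka0 tau_pos in auto)
      then show ?thesis using real_sqrt_le_mono[OF E] by simp
    qed
    also have "\<dots> \<le> C * (1 + B0) * sqrt (real N * tau)"
    proof (rule mult_right_mono)
      have "sqrt (2 * ka * exp (lm * T)) * B0 \<le> C * B0" unfolding C_def using B00 by (simp add: mult_right_mono)
      also have "\<dots> \<le> C * (1 + B0)" using C by simp
      finally show "sqrt (2 * ka * exp (lm * T)) * B0 \<le> C * (1 + B0)" .
    qed (use tau_pos in simp)
    also have "real N * tau = (T / real M) / (1 / real N)" unfolding tau_def by simp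
    finally show "sqrt (prob_space.expectation P (\<lambda>\<omega>. (LT_interp g u0 W T M N t n \<omega> - LT g u0 W T M N m n \<omega>)^2))
        \<le> C * (1 + sup_norm01 u0) * sqrt ((T / real M) / (1 / real N))"
      unfolding eqF B0_def .
  qed
qed


end
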